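(* The linear space $L^{(d-1)}$ is a relative $W_d(\mathbb C)$-section for the action of $O_d(\mathbb C)$ on $V$. More precisely, there exist rational invariants $f_1,\dots,f_d\in\mathbb C(V)^{O_d(\mathbb C)}$ such that, setting $$U_d(\mathbb C)=\Big\{(v,M)\in V:\ (v,M)\text{ is in the domain of each }f_k\text{ and }\prod_{k=1}^df_k(v,M)\neq0\Big\},$$ which is an invariant non-empty Zariski-open subset of $V$, the space $L^{(d-1)}$ intersects each orbit contained in $U_d(\mathbb C)$. Furthermore: $f_1=c_1^2+\dots+c_d^2$; $f_i|_{L^{(i-1)}}=c_{1(d-i+2)}^2+\dots+c_{(d-i+1)(d-i+2)}^2$ for $2\le i<d$; and $f_d|_{L^{(d-1)}}=c_{12}^2$.
   Context: Fix $d\ge2$. $V=\mathbb C^d\oplus\mathfrak{so}(d,\mathbb C)$ has elements $(v,M)$ with $v=(c_1,\dots,c_d)^\top$ and $M$ complex skew-symmetric with $M_{ij}=c_{ij}=-M_{ji}$ for $i<j$. $O_d(\mathbb C)=\{A\in\mathbb C^{d\times d}:AA^\top=I\}$ acts by $A\cdot(v,M)=(Av,AMA^\top)$. $L^{(1)}=\{(v,M):c_1=\dots=c_{d-1}=0\}$ and for $2\le i\le d-1$, $L^{(i)}=\{(v,M)\in L^{(i-1)}:c_{k(d-i+2)}=0,\ 1\le k\le d-i\}$; so $L^{(d-1)}$ consists of $(v,M)$ with $v=(0,\dots,0,c_d)$ and only $c_{12},c_{23},\dots,c_{(d-1)d}$ possibly nonzero in $M$. $W_d(\mathbb C)\subset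 O_d(\mathbb C)$ is the group of diagonal matrices with diagonal entries in $\{-1,1\}$. For a subgroup $N\subset G$ of a group acting rationally on a variety $X$, a subvariety $S\subset X$ is a relative $N$-section if there is a non-empty, $G$-invariant, Zariski-open $U\subset X$ such that $S$ intersects each orbit contained in $U$, and $N=\{n\in G:nS=S\}$. $\mathbb C(V)^{O_d(\mathbb C)}$ denotes the field of $O_d(\mathbb C)$-invariant rational functions on $V$. *)

theory Defs
  imports Complex_Main
begin

text \<open>Indices are 1-based: a point is a pair (v,M) with
  v :: nat => complex supported on {1..d} (v i = c_i) and M :: nat => nat => complex a
  skew-symmetric matrix supported on {1..d} x {1..d} (M i j = c_ij for i < j).\<close>

type_synonym pt = "(nat \<Rightarrow> complex) \<times> (nat \<Rightarrow> nat \<Rightarrow> complex)"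
type_synonym mat = "nat \<Rightarrow> nat \<Rightarrow> complex"

definition Vsp :: "nat \<Rightarrow> pt set" where
  "Vsp d = {(v, M). (\<forall>i. i \<notin> {1..d} \<longrightarrow> v i = 0)
                  \<and> (\<forall>i j. M i j = - M j i)
                  \<and> (\<forall>i j. i \<notin> {1..d} \<or> j \<notin> {1..d} \<longrightarrow> M i j = 0)}"

definition Od :: "nat \<Rightarrow> mat set" where
  "Od d = {A. (\<forall>i j. i \<notin> {1..d} \<or> j \<notin> {1..d} \<longrightarrow> A i j = 0)
            \<and> (\<forall>i\<in>{1..d}. \<forall>j\<in>{1..d}. (\<Sum>k=1..d. A i k * A j k) = (if i = j then 1 else 0))}"

definition Wd :: "nat \<Rightarrow> mat set" where
  "Wd d = {A. (\<forall>i j. i \<notin> {1..d} \<or> j \<notin> {1..d} \<longrightarrow> A i j = 0)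
            \<and> (\<forall>i j. i \<noteq> j \<longrightarrow> A i j = 0)
            \<and> (\<forall>i\<in>{1..d}. A i i = 1 \<or> A i i = -1)}"

definition act :: "nat \<Rightarrow> mat \<Rightarrow> pt \<Rightarrow> pt" where
  "act d A x = ((\<lambda>i. \<Sum>k=1..d. A i k * fst x k),
                (\<lambda>i j. \<Sum>k=1..d. \<Sum>l=1..d. A i k * snd x k l * A j l))"

definition orbit :: "nat \<Rightarrow> pt \<Rightarrow> pt set" where
  "orbit d x = (\<lambda>A. act d A x) ` Od d"

inductive_set polyfun :: "nat \<Rightarrow> (pt \<Rightarrow> complex) set" for d :: nat where
  pconst: "(\<lambda>x. c) \<in> polyfun d"
| pvec: "i \<in> {1..d} \<Longrightarrow> (\<lambda>x. fst x i) \<in> polyfun d"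
| pmat: "1 \<le> i \<Longrightarrow> i < j \<Longrightarrow> j \<le> d \<Longrightarrow> (\<lambda>x. snd x i j) \<in> polyfun d"
| padd: "p \<in> polyfun d \<Longrightarrow> q \<in> polyfun d \<Longrightarrow> (\<lambda>x. p x + q x) \<in> polyfun d"
| pmult: "p \<in> polyfun d \<Longrightarrow> q \<in> polyfun d \<Longrightarrow> (\<lambda>x. p x * q x) \<in> polyfun d"

definition zariski_open :: "nat \<Rightarrow> pt set \<Rightarrow> bool" where
  "zariski_open d U = (\<exists>S \<subseteq> polyfun d. U = {x \<in> Vsp d. \<exists>p\<in>S. p x \<noteq> 0})"

text \<open>A rational function on V is represented by a fraction (p,q) of polynomial functions with
  q not identically zero on V; (p,q) and (p',q') represent the same element of C(V) iff
  p q' = p' q on V.\<close>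
definition ratfun :: "nat \<Rightarrow> (pt \<Rightarrow> complex) \<times> (pt \<Rightarrow> complex) \<Rightarrow> bool" where
  "ratfun d f = (fst f \<in> polyfun d \<and> snd f \<in> polyfun d \<and> (\<exists>x\<in>Vsp d. snd f x \<noteq> 0))"

definition rat_equiv :: "nat \<Rightarrow> (pt \<Rightarrow> complex) \<times> (pt \<Rightarrow> complex) \<Rightarrow> (pt \<Rightarrow> complex) \<times> (pt \<Rightarrow> complex) \<Rightarrow> bool" where
  "rat_equiv d f g = (ratfun d f \<and> ratfun d g \<and> (\<forall>y\<in>Vsp d. fst f y * snd g y = fst g y * snd f y))"

definition rdom :: "nat \<Rightarrow> (pt \<Rightarrow> complex) \<times> (pt \<Rightarrow> complex) \<Rightarrow> pt set" where
  "rdom d f = {x \<in> Vsp d. \<exists>g. rat_equiv d f g \<and> snd g x \<noteq> 0}"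

definition reval :: "nat \<Rightarrow> (pt \<Rightarrow> complex) \<times> (pt \<Rightarrow> complex) \<Rightarrow> pt \<Rightarrow> complex" where
  "reval d f x = (SOME c. \<exists>g. rat_equiv d f g \<and> snd g x \<noteq> 0 \<and> c = fst g x / snd g x)"

definition rat_invariant :: "nat \<Rightarrow> (pt \<Rightarrow> complex) \<times> (pt \<Rightarrow> complex) \<Rightarrow> bool" where
  "rat_invariant d f = (\<forall>A\<in>Od d. \<forall>x\<in>Vsp d.
      fst f (act d A x) * snd f x = fst f x * snd f (act d A x))"

text \<open>The linear subspaces L^(i); Lset d 0 = V for convenience.\<close>
fun Lset :: "nat \<Rightarrow> nat \<Rightarrow> pt set" where
  "Lset d 0 = Vsp d"
| "Lset d (Suc 0) = {x \<in> Vsp d. \<forall>k\<in>{1..d-1}. fst x k = 0}"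
| "Lset d (Suc (Suc i)) = {x \<in> Lset d (Suc i).
      \<forall>k\<in>{1..d-(i+2)}. snd x k (d + 2 - (i+2)) = 0}"

definition relative_section :: "nat \<Rightarrow> mat set \<Rightarrow> pt set \<Rightarrow> bool" where
  "relative_section d N S =
     ((\<exists>U. U \<subseteq> Vsp d \<and> U \<noteq> {} \<and> zariski_open d U \<and> (\<forall>A\<in>Od d. act d A ` U \<subseteq> U)
          \<and> (\<forall>x\<in>U. orbit d x \<subseteq> U \<longrightarrow> orbit d x \<inter> S \<noteq> {}))
      \<and> N = {A \<in> Od d. act d A ` S = S})"

end

theory Submission
  imports Defs "Jordan_Normal_Form.Determinant"
begin


section \<open>Polynomial closure\<close>

lemma pf_add: "p \<in> polyfun d \<Longrightarrow> q \<in> polyfun d \<Longrightarrow> (\<lambda>x. p x + q x) \<in> polyfun d"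
  by (rule polyfun.padd)
lemma pf_mult: "p \<in> polyfun d \<Longrightarrow> q \<in> polyfun d \<Longrightarrow> (\<lambda>x. p x * q x) \<in> polyfun d"
  by (rule polyfun.pmult)
lemma pf_const: "(\<lambda>x. c) \<in> polyfun d" by (rule polyfun.pconst)
lemma pf_neg: "p \<in> polyfun d \<Longrightarrow> (\<lambda>x. - p x) \<in> polyfun d"
  using pf_mult[OF pf_const[of "-1"], of p] by simp
lemma pf_diff: "p \<in> polyfun d \<Longrightarrow> q \<in> polyfun d \<Longrightarrow> (\<lambda>x. p x - q x) \<in> polyfun d"
  using pf_add[OF _ pf_neg[of q]] by simp
lemma pf_pow: "p \<in> polyfun d \<Longrightarrow> (\<lambda>x. p x ^ n) \<in> polyfun d"
proof (induction n)
  case 0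
  have "(\<lambda>x. p x ^ 0) = (\<lambda>x. 1)" by simp
  then show ?case using pf_const by metis
next
  case (Suc n)
  have "(\<lambda>x. p x ^ Suc n) = (\<lambda>x. p x * p x ^ n)" by simp
  then show ?case using pf_mult[OF Suc(2) Suc(1)[OF Suc(2)]] by metis
qed
lemma pf_sum: "finite S \<Longrightarrow> (\<And>i. i \<in> S \<Longrightarrow> (\<lambda>x. f i x) \<in> polyfun d) \<Longrightarrow> (\<lambda>x. \<Sum>i\<in>S. f i x) \<in> polyfun d"
proof (induction S rule: finite_induct)
  case empty
  have "(\<lambda>x. \<Sum>i\<in>{}. f i x) = (\<lambda>x. 0)" by simp
  then show ?case using pf_const by metis
next
  case (insert a F)
  have e: "(\<lambda>x. \<Sum>i\<in>insert a F. f i x) = (\<lambda>x. f a x + (\<Sum>i\<in>F. f i x))" using insert(1,2) by simp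
  have h1: "(\<lambda>x. f a x) \<in> polyfun d" using insert(4) by simp
  have h2: "(\<lambda>x. \<Sum>i\<in>F. f i x) \<in> polyfun d" using insert(3,4) by simp
  show ?case unfolding e by (rule pf_add[OF h1 h2])
qed
lemma pf_prod: "finite S \<Longrightarrow> (\<And>i. i \<in> S \<Longrightarrow> (\<lambda>x. f i x) \<in> polyfun d) \<Longrightarrow> (\<lambda>x. \<Prod>i\<in>S. f i x) \<in> polyfun d"
proof (induction S rule: finite_induct)
  case empty
  have "(\<lambda>x. \<Prod>i\<in>{}. f i x) = (\<lambda>x. 1)" by simp
  then show ?case using pf_const by metis
next
  case (insert a F)
  have e: "(\<lambda>x. \<Prod>i\<in>insert a F. f i x) = (\<lambda>x. f a x * (\<Prod>i\<in>F. f i x))" using insert(1,2) by simp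
  have h1: "(\<lambda>x. f a x) \<in> polyfun d" using insert(4) by simp
  have h2: "(\<lambda>x. \<Prod>i\<in>F. f i x) \<in> polyfun d" using insert(3,4) by simp
  show ?case unfolding e by (rule pf_mult[OF h1 h2])
qed

definition E :: "pt \<Rightarrow> nat \<Rightarrow> nat \<Rightarrow> complex" where
  "E x i j = (if i < j then snd x i j else if j < i then - snd x j i else 0)"

lemma pf_E: "i \<in> {1..d} \<Longrightarrow> j \<in> {1..d} \<Longrightarrow> (\<lambda>x. E x i j) \<in> polyfun d"
proof -
  assume i: "i \<in> {1..d}" and j: "j \<in> {1..d}"
  consider "i < j" | "j < i" | "i = j" by linarith
  then show ?thesis
  proof cases
    case 1
    then have e: "(\<lambda>x. E x i j) = (\<lambda>x. snd x i j)" by (intro ext) (simp add: E_def)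
    show ?thesis unfolding e by (rule polyfun.pmat) (use i j 1 in auto)
  next
    case 2
    then have e: "(\<lambda>x. E x i j) = (\<lambda>x. - snd x j i)" by (intro ext) (simp add: E_def)
    show ?thesis unfolding e by (rule pf_neg, rule polyfun.pmat) (use i j 2 in auto)
  next
    case 3
    then have e: "(\<lambda>x. E x i j) = (\<lambda>x. 0)" by (intro ext) (simp add: E_def)
    show ?thesis unfolding e by (rule pf_const)
  qed
qed

lemma Vsp_iff: "x \<in> Vsp d \<longleftrightarrow> (\<forall>i. i \<notin> {1..d} \<longrightarrow> fst x i = 0)
                  \<and> (\<forall>i j. snd x i j = - snd x j i)
                  \<and> (\<forall>i j. i \<notin> {1..d} \<or> j \<notin> {1..d} \<longrightarrow> snd x i j = 0)"
  by (cases x) (simp only: Vsp_def mem_Collect_eq case_prod_conv fst_conv snd_conv)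

lemma V_vec: "x \<in> Vsp d \<Longrightarrow> i \<notin> {1..d} \<Longrightarrow> fst x i = 0"
  unfolding Vsp_iff by blast
lemma V_sk: "x \<in> Vsp d \<Longrightarrow> snd x i j = - snd x j i"
  unfolding Vsp_iff by blast
lemma V_mat: "x \<in> Vsp d \<Longrightarrow> i \<notin> {1..d} \<or> j \<notin> {1..d} \<Longrightarrow> snd x i j = 0"
  unfolding Vsp_iff by blast
lemma V_diag: "x \<in> Vsp d \<Longrightarrow> snd x i i = 0"
proof -
  assume x: "x \<in> Vsp d"
  have "snd x i i = - snd x i i" by (rule V_sk[OF x])
  then have "2 * snd x i i = 0" by (simp add: algebra_simps)
  then show "snd x i i = 0" by simp
qed

lemma E_V: "x \<in> Vsp d \<Longrightarrow> E x i j = snd x i j"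
proof -
  assume x: "x \<in> Vsp d"
  have "snd x i i = 0" by (rule V_diag[OF x])
  moreover have "- snd x j i = snd x i j" using V_sk[OF x, of j i] by simp
  ultimately show ?thesis unfolding E_def by auto
qed

definition mv :: "nat \<Rightarrow> pt \<Rightarrow> (nat \<Rightarrow> complex) \<Rightarrow> nat \<Rightarrow> complex" where
  "mv d x u = (\<lambda>i. \<Sum>l=1..d. E x i l * u l)"
definition nrm :: "nat \<Rightarrow> (nat \<Rightarrow> complex) \<Rightarrow> complex" where
  "nrm d u = (\<Sum>i=1..d. (u i)\<^sup>2)"

fun PD :: "nat \<Rightarrow> nat \<Rightarrow> pt \<Rightarrow> (nat \<Rightarrow> complex) \<times> complex" where
  "PD d 0 x = (fst x, 1)"
| "PD d (Suc 0) x = (mv d x (fst x), 1)"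
| "PD d (Suc (Suc k)) x =
     ((\<lambda>i. snd (PD d (Suc k) x) * nrm d (fst (PD d k x)) * mv d x (fst (PD d (Suc k) x)) i
           + nrm d (fst (PD d (Suc k) x)) * snd (PD d k x) * fst (PD d k x) i),
      (snd (PD d (Suc k) x))\<^sup>2 * nrm d (fst (PD d k x)))"

definition P :: "nat \<Rightarrow> nat \<Rightarrow> pt \<Rightarrow> nat \<Rightarrow> complex" where "P d k x = fst (PD d k x)"
definition D :: "nat \<Rightarrow> nat \<Rightarrow> pt \<Rightarrow> complex" where "D d k x = snd (PD d k x)"

lemma P0: "P d 0 x = fst x" and D0: "D d 0 x = 1"
  and P1: "P d (Suc 0) x = mv d x (fst x)" and D1: "D d (Suc 0) x = 1"
  and PSS: "P d (Suc (Suc k)) x = (\<lambda>i. D d (Suc k) x * nrm d (P d k x) * mv d x (P d (Suc k) x) i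
           + nrm d (P d (Suc k) x) * D d k x * P d k x i)"
  and DSS: "D d (Suc (Suc k)) x = (D d (Suc k) x)\<^sup>2 * nrm d (P d k x)"
  by (simp_all add: P_def D_def)

lemma pf_mv: "(\<And>l. l \<in> {1..d} \<Longrightarrow> (\<lambda>x. u x l) \<in> polyfun d) \<Longrightarrow> i \<in> {1..d} \<Longrightarrow>
   (\<lambda>x. mv d x (u x) i) \<in> polyfun d"
  unfolding mv_def by (rule pf_sum) (simp, rule pf_mult, rule pf_E, simp_all)

lemma pf_nrm: "(\<And>l. l \<in> {1..d} \<Longrightarrow> (\<lambda>x. u x l) \<in> polyfun d) \<Longrightarrow> (\<lambda>x. nrm d (u x)) \<in> polyfun d"
  unfolding nrm_def by (rule pf_sum) (simp, rule pf_pow, simp)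

definition pfc :: "nat \<Rightarrow> nat \<Rightarrow> bool" where
  "pfc d k = ((\<forall>i\<in>{1..d}. (\<lambda>x. P d k x i) \<in> polyfun d) \<and> (\<lambda>x. D d k x) \<in> polyfun d
  \<and> (\<forall>i\<in>{1..d}. (\<lambda>x. P d (Suc k) x i) \<in> polyfun d) \<and> (\<lambda>x. D d (Suc k) x) \<in> polyfun d)"

lemma pfc0: "pfc d 0"
proof -
  have a: "\<forall>i\<in>{1..d}. (\<lambda>x. P d 0 x i) \<in> polyfun d" by (simp add: P0 polyfun.pvec)
  have b: "\<forall>i\<in>{1..d}. (\<lambda>x. P d (Suc 0) x i) \<in> polyfun d"
    unfolding P1 by (intro ballI pf_mv polyfun.pvec) auto
  have e: "(\<lambda>x. D d 0 x) = (\<lambda>x. 1)" "(\<lambda>x. D d (Suc 0) x) = (\<lambda>x. 1)" by (rule ext, simp only: D0 D1)+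
  have c: "(\<lambda>x. D d 0 x) \<in> polyfun d" "(\<lambda>x. D d (Suc 0) x) \<in> polyfun d"
    unfolding e by (rule pf_const)+
  show ?thesis unfolding pfc_def by (intro conjI a b c)
qed

lemma pfcS: assumes "pfc d k" shows "pfc d (Suc k)"
proof -
  note hh = assms[unfolded pfc_def]
  note h1 = conjunct1[OF hh]
  note h2 = conjunct1[OF conjunct2[OF hh]]
  note h3 = conjunct1[OF conjunct2[OF conjunct2[OF hh]]]
  note h4 = conjunct2[OF conjunct2[OF conjunct2[OF hh]]]
  have n1: "(\<lambda>x. nrm d (P d k x)) \<in> polyfun d" by (rule pf_nrm) (erule bspec[OF h1])
  have n2: "(\<lambda>x. nrm d (P d (Suc k) x)) \<in> polyfun d" by (rule pf_nrm) (erule bspec[OF h3])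
  have m: "i \<in> {1..d} \<Longrightarrow> (\<lambda>x. mv d x (P d (Suc k) x) i) \<in> polyfun d" for i
    by (rule pf_mv) (erule bspec[OF h3])+
  have a: "\<forall>i\<in>{1..d}. (\<lambda>x. P d (Suc (Suc k)) x i) \<in> polyfun d"
  proof (rule ballI)
    fix i assume i: "i \<in> {1..d}"
    note p0 = bspec[OF h1 i]
    have t1: "(\<lambda>x. D d (Suc k) x * nrm d (P d k x) * mv d x (P d (Suc k) x) i) \<in> polyfun d"
      by (rule pf_mult[OF pf_mult[OF h4 n1] m[OF i]])
    have t2: "(\<lambda>x. nrm d (P d (Suc k) x) * D d k x * P d k x i) \<in> polyfun d"
      by (rule pf_mult[OF pf_mult[OF n2 h2] p0])
    have e: "(\<lambda>x. P d (Suc (Suc k)) x i) = (\<lambda>x. D d (Suc k) x * nrm d (P d k x) * mv d x (P d (Suc k) x) i + nrm d (P d (Suc k) x) * D d k x * P d k x i)"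
      by (rule ext) (simp only: PSS)
    show "(\<lambda>x. P d (Suc (Suc k)) x i) \<in> polyfun d" unfolding e
      by (rule pf_add[OF t1 t2])
  qed
  have e2: "(\<lambda>x. D d (Suc (Suc k)) x) = (\<lambda>x. (D d (Suc k) x)\<^sup>2 * nrm d (P d k x))"
    by (rule ext) (simp only: DSS)
  have b: "(\<lambda>x. D d (Suc (Suc k)) x) \<in> polyfun d" unfolding e2
    by (rule pf_mult[OF pf_pow[OF h4] n1])
  show ?thesis unfolding pfc_def by (intro conjI h3 h4 a b)
qed

lemma pfc_all: "pfc d k"
  by (induction k) (simp_all add: pfc0 pfcS)

lemma pf_PD: "(\<forall>i\<in>{1..d}. (\<lambda>x. P d k x i) \<in> polyfun d) \<and> (\<lambda>x. D d k x) \<in> polyfun d"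
  using pfc_all[of d k] unfolding pfc_def by (elim conjE) (intro conjI)

lemma pf_P: "i \<in> {1..d} \<Longrightarrow> (\<lambda>x. P d k x i) \<in> polyfun d" using pf_PD[of d k] by simp
lemma pf_D: "(\<lambda>x. D d k x) \<in> polyfun d" using pf_PD[of d k] by simp
lemma pf_nP: "(\<lambda>x. nrm d (P d k x)) \<in> polyfun d" by (rule pf_nrm) (rule pf_P)



definition Av :: "nat \<Rightarrow> (nat \<Rightarrow> nat \<Rightarrow> complex) \<Rightarrow> (nat \<Rightarrow> complex) \<Rightarrow> nat \<Rightarrow> complex" where
  "Av d A u = (\<lambda>i. \<Sum>k=1..d. A i k * u k)"

lemma sum1: "(\<Sum>k=1..d. f k) = (\<Sum>k<d. f (Suc k))"
  using sum.atLeast1_atMost_eq[of f d] by (simp add: One_nat_def)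

definition tm :: "nat \<Rightarrow> (nat \<Rightarrow> nat \<Rightarrow> complex) \<Rightarrow> complex Matrix.mat" where
  "tm d A = Matrix.mat d d (\<lambda>(i,j). A (Suc i) (Suc j))"

lemma Od_rows: "A \<in> Od d \<Longrightarrow> i \<in> {1..d} \<Longrightarrow> j \<in> {1..d} \<Longrightarrow>
   (\<Sum>k=1..d. A i k * A j k) = (if i = j then 1 else 0)"
  unfolding Od_def by blast

lemma Od_zero: "A \<in> Od d \<Longrightarrow> i \<notin> {1..d} \<or> j \<notin> {1..d} \<Longrightarrow> A i j = 0"
  unfolding Od_def by blast

lemma Od_cols: assumes A: "A \<in> Od d" and i: "i \<in> {1..d}" and j: "j \<in> {1..d}"
  shows "(\<Sum>k=1..d. A k i * A k j) = (if i = j then 1 else 0)"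
proof -
  have c: "tm d A \<in> carrier_mat d d" "transpose_mat (tm d A) \<in> carrier_mat d d" by (auto simp: tm_def)
  have "tm d A * transpose_mat (tm d A) = 1\<^sub>m d"
  proof (rule eq_matI)
    fix i j assume "i < dim_row (1\<^sub>m d)" "j < dim_col (1\<^sub>m d)"
    then have ij: "i < d" "j < d" by simp_all
    have "(tm d A * transpose_mat (tm d A)) $$ (i,j) = (\<Sum>k<d. A (Suc i) (Suc k) * A (Suc j) (Suc k))"
      using ij by (simp add: tm_def scalar_prod_def lessThan_atLeast0)
    also have "\<dots> = (\<Sum>k=1..d. A (Suc i) k * A (Suc j) k)" by (simp only: sum1)
    also have "\<dots> = (if i = j then 1 else 0)" using Od_rows[OF A, of "Suc i" "Suc j"] ij by simp
    finally show "(tm d A * transpose_mat (tm d A)) $$ (i,j) = 1\<^sub>m d $$ (i,j)" using ij by simp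
  qed (auto simp: tm_def)
  then have e: "transpose_mat (tm d A) * tm d A = 1\<^sub>m d" by (rule mat_mult_left_right_inverse[OF c])
  have i1: "i - 1 < d" "j - 1 < d" using i j by auto
  have "(transpose_mat (tm d A) * tm d A) $$ (i - 1, j - 1) = (\<Sum>k<d. A (Suc k) i * A (Suc k) j)"
    using i1 i j by (simp add: tm_def scalar_prod_def lessThan_atLeast0)
  also have "\<dots> = (\<Sum>k=1..d. A k i * A k j)" by (simp only: sum1)
  finally have f: "(\<Sum>k=1..d. A k i * A k j) = 1\<^sub>m d $$ (i - 1, j - 1)" unfolding e by simp
  have ij: "(i - Suc 0 = j - Suc 0) = (i = j)" using i j by auto
  show ?thesis using f i1 by (simp add: ij)
qed

lemma col_contract: assumes A: "A \<in> Od d" and p: "p \<in> {1..d}"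
  shows "(\<Sum>l=1..d. A l p * (\<Sum>q=1..d. A l q * u q)) = u p"
proof -
  have "(\<Sum>l=1..d. A l p * (\<Sum>q=1..d. A l q * u q)) = (\<Sum>l=1..d. \<Sum>q=1..d. A l p * A l q * u q)"
    by (simp add: sum_distrib_left mult.assoc)
  also have "\<dots> = (\<Sum>q=1..d. \<Sum>l=1..d. A l p * A l q * u q)" by (rule sum.swap)
  also have "\<dots> = (\<Sum>q=1..d. (\<Sum>l=1..d. A l p * A l q) * u q)" by (simp add: sum_distrib_right)
  also have "\<dots> = (\<Sum>q=1..d. (if p = q then u q else 0))"
  proof (rule sum.cong[OF refl])
    fix q assume q: "q \<in> {1..d}"
    show "(\<Sum>l=1..d. A l p * A l q) * u q = (if p = q then u q else 0)" using Od_cols[OF A p q] by simp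
  qed
  also have "\<dots> = u p" using p by simp
  finally show ?thesis .
qed

lemma act_fst: "fst (act d A x) = Av d A (fst x)" by (simp add: act_def Av_def)
lemma act_snd: "snd (act d A x) i j = (\<Sum>k=1..d. \<Sum>l=1..d. A i k * snd x k l * A j l)"
  by (simp add: act_def)

lemma act_V: assumes A: "A \<in> Od d" and x: "x \<in> Vsp d" shows "act d A x \<in> Vsp d"
proof -
  have 1: "\<forall>i. i \<notin> {1..d} \<longrightarrow> fst (act d A x) i = 0"
    by (auto simp: act_fst Av_def Od_zero[OF A])
  have 2: "\<forall>i j. snd (act d A x) i j = - snd (act d A x) j i"
  proof (intro allI)
    fix i j
    have "snd (act d A x) j i = (\<Sum>k=1..d. \<Sum>l=1..d. A j k * snd x k l * A i l)" by (rule act_snd)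
    also have "\<dots> = (\<Sum>l=1..d. \<Sum>k=1..d. A j k * snd x k l * A i l)" by (rule sum.swap)
    also have "\<dots> = (\<Sum>l=1..d. \<Sum>k=1..d. - (A i l * snd x l k * A j k))"
    proof (intro sum.cong refl)
      fix l k
      have "snd x k l = - snd x l k" by (rule V_sk[OF x])
      then show "A j k * snd x k l * A i l = - (A i l * snd x l k * A j k)" by simp
    qed
    also have "\<dots> = - snd (act d A x) i j" by (simp add: act_snd sum_negf)
    finally show "snd (act d A x) i j = - snd (act d A x) j i" by simp
  qed
  have 3: "\<forall>i j. i \<notin> {1..d} \<or> j \<notin> {1..d} \<longrightarrow> snd (act d A x) i j = 0"
    by (auto simp: act_snd Od_zero[OF A])
  show ?thesis unfolding Vsp_iff using 1 2 3 by blast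
qed

lemma mv_cong: "(\<And>l. l \<in> {1..d} \<Longrightarrow> u l = w l) \<Longrightarrow> mv d x u i = mv d x w i"
  unfolding mv_def by (rule sum.cong) simp_all
lemma nrm_cong: "(\<And>l. l \<in> {1..d} \<Longrightarrow> u l = w l) \<Longrightarrow> nrm d u = nrm d w"
  unfolding nrm_def by (rule sum.cong) simp_all
lemma Av_cong: "(\<And>l. l \<in> {1..d} \<Longrightarrow> u l = w l) \<Longrightarrow> Av d A u i = Av d A w i"
  unfolding Av_def by (rule sum.cong) simp_all

lemma mv_equiv: assumes A: "A \<in> Od d" and x: "x \<in> Vsp d"
  shows "mv d (act d A x) (Av d A u) i = Av d A (mv d x u) i"
proof -
  have Ax: "act d A x \<in> Vsp d" by (rule act_V[OF A x])
  have "mv d (act d A x) (Av d A u) i = (\<Sum>l=1..d. (\<Sum>k=1..d. \<Sum>p=1..d. A i k * snd x k p * A l p) * Av d A u l)"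
    unfolding mv_def E_V[OF Ax] act_snd by simp
  also have "\<dots> = (\<Sum>l=1..d. \<Sum>k=1..d. \<Sum>p=1..d. A i k * snd x k p * (A l p * Av d A u l))"
    by (simp add: sum_distrib_right mult.assoc)
  also have "\<dots> = (\<Sum>k=1..d. \<Sum>l=1..d. \<Sum>p=1..d. A i k * snd x k p * (A l p * Av d A u l))"
    by (rule sum.swap)
  also have "\<dots> = (\<Sum>k=1..d. \<Sum>p=1..d. \<Sum>l=1..d. A i k * snd x k p * (A l p * Av d A u l))"
    by (rule sum.cong[OF refl], rule sum.swap)
  also have "\<dots> = (\<Sum>k=1..d. \<Sum>p=1..d. A i k * snd x k p * (\<Sum>l=1..d. A l p * Av d A u l))"
    by (simp add: sum_distrib_left)
  also have "\<dots> = (\<Sum>k=1..d. \<Sum>p=1..d. A i k * snd x k p * u p)"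
  proof (intro sum.cong refl)
    fix k p assume "k \<in> {1..d}" and p: "p \<in> {1..d}"
    show "A i k * snd x k p * (\<Sum>l=1..d. A l p * Av d A u l) = A i k * snd x k p * u p"
      unfolding Av_def using col_contract[OF A p, of u] by simp
  qed
  also have "\<dots> = Av d A (mv d x u) i"
    unfolding Av_def mv_def E_V[OF x] by (simp add: sum_distrib_left mult.assoc)
  finally show ?thesis .
qed

lemma nrm_Av: assumes A: "A \<in> Od d" shows "nrm d (Av d A u) = nrm d u"
proof -
  have "nrm d (Av d A u) = (\<Sum>i=1..d. (\<Sum>k=1..d. A i k * u k) * (\<Sum>l=1..d. A i l * u l))"
    unfolding nrm_def Av_def by (simp add: power2_eq_square)
  also have "\<dots> = (\<Sum>i=1..d. \<Sum>k=1..d. u k * (A i k * (\<Sum>l=1..d. A i l * u l)))"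
    by (simp add: sum_distrib_right mult_ac)
  also have "\<dots> = (\<Sum>k=1..d. \<Sum>i=1..d. u k * (A i k * (\<Sum>l=1..d. A i l * u l)))" by (rule sum.swap)
  also have "\<dots> = (\<Sum>k=1..d. u k * u k)"
  proof (intro sum.cong refl)
    fix k i assume k: "k \<in> {1..d}" and "i \<in> {1..d}"
    show "(\<Sum>i=1..d. u k * (A i k * (\<Sum>l=1..d. A i l * u l))) = u k * u k"
      using col_contract[OF A k, of u] by (simp add: sum_distrib_left[symmetric])
  qed
  also have "\<dots> = nrm d u" unfolding nrm_def by (simp add: power2_eq_square)
  finally show ?thesis .
qed

lemma Av_lin: "Av d A (\<lambda>l. a * f l + b * g l) i = a * Av d A f i + b * Av d A g i"
  unfolding Av_def by (simp add: sum.distrib sum_distrib_left mult_ac distrib_left)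

definition eqc :: "nat \<Rightarrow> (nat \<Rightarrow> nat \<Rightarrow> complex) \<Rightarrow> pt \<Rightarrow> nat \<Rightarrow> bool" where
  "eqc d A x k = ((\<forall>i\<in>{1..d}. P d k (act d A x) i = Av d A (P d k x) i) \<and> D d k (act d A x) = D d k x
     \<and> (\<forall>i\<in>{1..d}. P d (Suc k) (act d A x) i = Av d A (P d (Suc k) x) i) \<and> D d (Suc k) (act d A x) = D d (Suc k) x)"

lemma eqc0: assumes A: "A \<in> Od d" and x: "x \<in> Vsp d" shows "eqc d A x 0"
proof -
  have "P d (Suc 0) (act d A x) i = Av d A (P d (Suc 0) x) i" for i
    unfolding P1 act_fst[symmetric] by (simp only: act_fst mv_equiv[OF A x])
  then show ?thesis unfolding eqc_def by (simp add: P0 D0 D1 act_fst)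
qed

lemma eqcS: assumes A: "A \<in> Od d" and x: "x \<in> Vsp d" and h: "eqc d A x k" shows "eqc d A x (Suc k)"
proof -
  have h1: "\<And>i. i \<in> {1..d} \<Longrightarrow> P d k (act d A x) i = Av d A (P d k x) i"
   and h2: "D d k (act d A x) = D d k x"
   and h3: "\<And>i. i \<in> {1..d} \<Longrightarrow> P d (Suc k) (act d A x) i = Av d A (P d (Suc k) x) i"
   and h4: "D d (Suc k) (act d A x) = D d (Suc k) x"
    using h unfolding eqc_def by auto
  have n1: "nrm d (P d k (act d A x)) = nrm d (P d k x)"
    using nrm_cong[of d "P d k (act d A x)" "Av d A (P d k x)"] h1 nrm_Av[OF A] by simp
  have n2: "nrm d (P d (Suc k) (act d A x)) = nrm d (P d (Suc k) x)"
    using nrm_cong[of d "P d (Suc k) (act d A x)" "Av d A (P d (Suc k) x)"] h3 nrm_Av[OF A] by simp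
  have m: "mv d (act d A x) (P d (Suc k) (act d A x)) i = Av d A (mv d x (P d (Suc k) x)) i" for i
    using mv_cong[of d "P d (Suc k) (act d A x)" "Av d A (P d (Suc k) x)"] h3 mv_equiv[OF A x] by simp
  have a: "P d (Suc (Suc k)) (act d A x) i = Av d A (P d (Suc (Suc k)) x) i" if i: "i \<in> {1..d}" for i
  proof -
    have "P d (Suc (Suc k)) (act d A x) i = (D d (Suc k) x * nrm d (P d k x)) * Av d A (mv d x (P d (Suc k) x)) i
        + (nrm d (P d (Suc k) x) * D d k x) * Av d A (P d k x) i"
      unfolding PSS using h1[OF i] h2 h4 n1 n2 m by simp
    also have "\<dots> = Av d A (\<lambda>l. (D d (Suc k) x * nrm d (P d k x)) * mv d x (P d (Suc k) x) l
        + (nrm d (P d (Suc k) x) * D d k x) * P d k x l) i" by (rule Av_lin[symmetric])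
    also have "\<dots> = Av d A (P d (Suc (Suc k)) x) i" unfolding PSS by (simp add: mult.assoc)
    finally show ?thesis .
  qed
  have b: "D d (Suc (Suc k)) (act d A x) = D d (Suc (Suc k)) x"
    unfolding DSS using h4 n1 by simp
  show ?thesis unfolding eqc_def using a b h3 h4 by simp
qed

lemma eqc_all: assumes A: "A \<in> Od d" and x: "x \<in> Vsp d" shows "eqc d A x k"
  by (induction k) (simp_all add: eqc0[OF A x] eqcS[OF A x])

lemma P_equiv: "A \<in> Od d \<Longrightarrow> x \<in> Vsp d \<Longrightarrow> i \<in> {1..d} \<Longrightarrow> P d k (act d A x) i = Av d A (P d k x) i"
  using eqc_all unfolding eqc_def by blast
lemma D_inv: "A \<in> Od d \<Longrightarrow> x \<in> Vsp d \<Longrightarrow> D d k (act d A x) = D d k x"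
  using eqc_all unfolding eqc_def by blast
lemma nP_inv: assumes "A \<in> Od d" "x \<in> Vsp d" shows "nrm d (P d k (act d A x)) = nrm d (P d k x)"
  using nrm_cong[of d "P d k (act d A x)" "Av d A (P d k x)"] P_equiv[OF assms] nrm_Av[OF assms(1)] by simp



lemma L_iff: "x \<in> Lset d m \<longleftrightarrow> x \<in> Vsp d \<and> (1 \<le> m \<longrightarrow> (\<forall>k\<in>{1..d-1}. fst x k = 0))
   \<and> (\<forall>i\<in>{2..m}. \<forall>k\<in>{1..d-i}. snd x k (d + 2 - i) = 0)"
proof (induction m)
  case 0
  then show ?case by simp
next
  case (Suc m)
  show ?case
  proof (cases m)
    case 0
    then show ?thesis by auto
  next
    case (Suc n)
    have e: "{2..Suc (Suc n)} = insert (Suc (Suc n)) {2..Suc n}" by auto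
    have "x \<in> Lset d (Suc m) \<longleftrightarrow> x \<in> Lset d m \<and> (\<forall>k\<in>{1..d-(n+2)}. snd x k (d + 2 - (n+2)) = 0)"
      using Suc by simp
    also have "\<dots> \<longleftrightarrow> x \<in> Vsp d \<and> (1 \<le> Suc m \<longrightarrow> (\<forall>k\<in>{1..d-1}. fst x k = 0))
      \<and> (\<forall>i\<in>{2..Suc m}. \<forall>k\<in>{1..d-i}. snd x k (d + 2 - i) = 0)"
      unfolding Suc.IH using Suc e by auto
    finally show ?thesis .
  qed
qed

lemma L_V: "x \<in> Lset d m \<Longrightarrow> x \<in> Vsp d" unfolding L_iff by blast

lemma vecz: "x \<in> Lset d m \<Longrightarrow> 1 \<le> m \<Longrightarrow> 1 \<le> k \<Longrightarrow> k < d \<Longrightarrow> fst x k = 0"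
  unfolding L_iff by auto

lemma colz: assumes x: "x \<in> Lset d m" and j: "j \<le> d" "d - m + 2 \<le> j" and k: "1 \<le> k" "k + 2 \<le> j"
  shows "snd x k j = 0"
proof -
  have h: "\<forall>i\<in>{2..m}. \<forall>k\<in>{1..d-i}. snd x k (d + 2 - i) = 0" using x unfolding L_iff by blast
  have i: "d + 2 - j \<in> {2..m}" using j by auto
  have kk: "k \<in> {1..d - (d + 2 - j)}" using j k by auto
  have "d + 2 - (d + 2 - j) = j" using j by auto
  then show ?thesis using h i kk by metis
qed

lemma colzE: assumes x: "x \<in> Lset d m" and j: "j \<le> d" "d - m + 2 \<le> j" and k: "1 \<le> k" "k + 2 \<le> j"
  shows "E x k j = 0" "E x j k = 0"
  using colz[OF x j k] k unfolding E_def by auto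

lemma L_mono: "m \<le> m' \<Longrightarrow> x \<in> Lset d m' \<Longrightarrow> x \<in> Lset d m"
  unfolding L_iff by auto

lemma E_skew: "E x i j = - E x j i" unfolding E_def by auto
lemma E_diag: "E x i i = 0" unfolding E_def by auto

definition w :: "nat \<Rightarrow> nat \<Rightarrow> pt \<Rightarrow> nat \<Rightarrow> complex" where
  "w d m x = (\<lambda>i. if 1 \<le> i \<and> i \<le> d - m then E x i (d - m + 1) else 0)"

fun kap :: "nat \<Rightarrow> nat \<Rightarrow> pt \<Rightarrow> complex" where
  "kap d 0 x = 0"
| "kap d (Suc 0) x = fst x d"
| "kap d (Suc (Suc m)) x = D d (Suc m) x * nrm d (P d m x) * kap d (Suc m) x * E x (d - Suc m) (d - Suc m + 1)"

definition b :: "nat \<Rightarrow> nat \<Rightarrow> pt \<Rightarrow> complex" where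
  "b d m x = (if m = 0 then fst x d else kap d m x * E x (d - m) (d - m + 1))"

lemma inv: "kap d (Suc m) x * D d m x = D d (Suc m) x * b d m x"
proof (cases m)
  case 0
  then show ?thesis by (simp add: D0 D1 b_def)
next
  case (Suc n)
  then show ?thesis by (simp add: DSS b_def power2_eq_square mult_ac)
qed

lemma sum_single: "finite S \<Longrightarrow> a \<in> S \<Longrightarrow> (\<And>l. l \<in> S \<Longrightarrow> l \<noteq> a \<Longrightarrow> f l = 0) \<Longrightarrow> sum f S = f a"
  by (simp add: sum.remove sum.neutral)

lemma nrm_single: assumes "a \<in> {1..d}" "\<And>i. i \<in> {1..d} \<Longrightarrow> u i = (if i = a then c else 0)"
  shows "nrm d u = c\<^sup>2"
proof -
  have "nrm d u = (u a)\<^sup>2" unfolding nrm_def by (rule sum_single) (use assms in auto)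
  then show ?thesis using assms by simp
qed

lemma B_from_C: assumes d: "m + 2 \<le> d" and x: "x \<in> Lset d (Suc m)"
  and C: "1 \<le> m \<Longrightarrow> \<forall>i\<in>{1..d}. P d m x i = kap d m x * w d m x i"
  and i: "i \<in> {1..d}"
  shows "P d m x i = (if i = d - m then b d m x else 0)"
proof (cases "m = 0")
  case True
  then show ?thesis using vecz[OF x, of i] i by (auto simp: P0 b_def)
next
  case False
  then have m: "1 \<le> m" by simp
  have "P d m x i = kap d m x * w d m x i" using C[OF m] i by blast
  also have "\<dots> = (if i = d - m then b d m x else 0)"
  proof (cases "i \<le> d - m")
    case True
    show ?thesis
    proof (cases "i = d - m")
      case True
      then show ?thesis using False i by (simp add: w_def b_def)
    next
      case False
      have "E x i (d - m + 1) = 0" by (rule colzE(1)[OF x]) (use d i m \<open>i \<le> d - m\<close> False in auto)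
      then show ?thesis using False by (simp add: w_def)
    qed
  next
    case False
    then show ?thesis by (simp add: w_def)
  qed
  finally show ?thesis .
qed

lemma mvP1: assumes "x \<in> Lset d (Suc 0)" "2 \<le> d" "i \<in> {1..d}"
  shows "P d (Suc 0) x i = kap d (Suc 0) x * w d (Suc 0) x i"
proof -
  have "P d (Suc 0) x i = (\<Sum>l=1..d. E x i l * fst x l)" by (simp add: P1 mv_def)
  also have "\<dots> = E x i d * fst x d"
    by (rule sum_single) (use assms vecz[OF assms(1)] in auto)
  also have "\<dots> = kap d (Suc 0) x * w d (Suc 0) x i"
  proof (cases "i = d")
    case True
    then show ?thesis by (simp add: w_def E_diag)
  next
    case False
    then show ?thesis using assms by (auto simp: w_def)
  qed
  finally show ?thesis .
qed

lemma C_step: assumes d: "m + 3 \<le> d" and x: "x \<in> Lset d (Suc (Suc m))"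
  and Bm: "\<And>i. i \<in> {1..d} \<Longrightarrow> P d m x i = (if i = d - m then b d m x else 0)"
  and Bm1: "\<And>i. i \<in> {1..d} \<Longrightarrow> P d (Suc m) x i = (if i = d - Suc m then b d (Suc m) x else 0)"
  and i: "i \<in> {1..d}"
  shows "P d (Suc (Suc m)) x i = kap d (Suc (Suc m)) x * w d (Suc (Suc m)) x i"
proof -
  define j where "j = d - Suc m"
  define a where "a = E x j (j + 1)"
  have j1: "j + 1 = d - m" "2 \<le> j" "j + 1 \<le> d" using d by (auto simp: j_def)
  have n0: "nrm d (P d m x) = (b d m x)\<^sup>2" by (rule nrm_single[OF _ Bm]) (use d in auto)
  have n1: "nrm d (P d (Suc m) x) = (b d (Suc m) x)\<^sup>2" by (rule nrm_single[OF _ Bm1]) (use d in auto)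
  have mvv: "mv d x (P d (Suc m) x) i = E x i j * b d (Suc m) x"
  proof -
    have "mv d x (P d (Suc m) x) i = (\<Sum>l=1..d. E x i l * P d (Suc m) x l)" by (simp add: mv_def)
    also have "\<dots> = E x i j * P d (Suc m) x j"
      by (rule sum_single) (use Bm1 j1 in \<open>auto simp: j_def\<close>)
    also have "\<dots> = E x i j * b d (Suc m) x" using Bm1[of j] j1 by (auto simp: j_def)
    finally show ?thesis .
  qed
  have Ew: "E x i j = w d (Suc (Suc m)) x i - (if i = j + 1 then a else 0)"
  proof -
    have wd: "d - Suc (Suc m) = j - 1" "d - Suc (Suc m) + 1 = j" using j1 by (auto simp: j_def)
    consider "i < j" | "i = j" | "i = j + 1" | "j + 2 \<le> i" by linarith
    then show ?thesis
    proof cases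
      case 1
      then show ?thesis using i j1 by (auto simp: w_def wd)
    next
      case 2
      then show ?thesis using j1 by (auto simp: w_def wd E_diag)
    next
      case 3
      then show ?thesis using j1 by (auto simp: w_def wd a_def intro: E_skew)
    next
      case 4
      have "E x i j = 0" using colzE(2)[OF x, of i j] 4 i j1 by (auto simp: j_def)
      then show ?thesis using 4 by (auto simp: w_def wd)
    qed
  qed
  have bm1: "b d (Suc m) x = kap d (Suc m) x * a" by (simp add: b_def a_def j_def)
  have kk: "kap d (Suc (Suc m)) x = D d (Suc m) x * nrm d (P d m x) * kap d (Suc m) x * a"
    by (simp add: a_def j_def)
  have iv: "kap d (Suc m) x * D d m x = D d (Suc m) x * b d m x" by (rule inv)
  have Pm: "P d m x i = (if i = j + 1 then b d m x else 0)" using Bm[OF i] j1 by simp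
  have "P d (Suc (Suc m)) x i = D d (Suc m) x * nrm d (P d m x) * (E x i j * b d (Suc m) x)
      + nrm d (P d (Suc m) x) * D d m x * P d m x i" by (simp add: PSS mvv)
  also have "\<dots> = kap d (Suc (Suc m)) x * w d (Suc (Suc m)) x i
      + (if i = j + 1 then kap d (Suc m) x * a * b d m x * (kap d (Suc m) x * a * D d m x - D d (Suc m) x * b d m x * a) else 0)"
    unfolding Ew Pm n0 n1 bm1 kk by (simp add: algebra_simps power2_eq_square)
  also have "\<dots> = kap d (Suc (Suc m)) x * w d (Suc (Suc m)) x i"
  proof -
    have "kap d (Suc m) x * a * D d m x - D d (Suc m) x * b d m x * a = 0"
      using iv by (simp add: algebra_simps)
    then show ?thesis by simp
  qed
  finally show ?thesis .
qed

lemma C_all: "1 \<le> m \<Longrightarrow> m + 1 \<le> d \<Longrightarrow> x \<in> Lset d m \<Longrightarrow> i \<in> {1..d} \<Longrightarrow> P d m x i = kap d m x * w d m x i"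
proof (induction m arbitrary: x i rule: less_induct)
  case (less m)
  show ?case
  proof (cases m)
    case 0
    then show ?thesis using less by simp
  next
    case (Suc m1)
    show ?thesis
    proof (cases m1)
      case 0
      then show ?thesis using less Suc mvP1 by simp
    next
      case (Suc m2)
      have mm: "m = Suc (Suc m2)" using Suc \<open>m = Suc m1\<close> by simp
      have x: "x \<in> Lset d (Suc (Suc m2))" using less mm by simp
      have x1: "x \<in> Lset d (Suc m2)" by (rule L_mono[OF _ x]) simp
      have Bm: "P d m2 x i' = (if i' = d - m2 then b d m2 x else 0)" if "i' \<in> {1..d}" for i'
      proof (rule B_from_C[OF _ x1 _ that])
        show "m2 + 2 \<le> d" using less mm by simp
        show "1 \<le> m2 \<Longrightarrow> \<forall>i\<in>{1..d}. P d m2 x i = kap d m2 x * w d m2 x i"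
          using less.IH[of m2] mm less L_mono[OF _ x, of m2] by auto
      qed
      have Bm1: "P d (Suc m2) x i' = (if i' = d - Suc m2 then b d (Suc m2) x else 0)" if "i' \<in> {1..d}" for i'
      proof (rule B_from_C[OF _ x _ that])
        show "Suc m2 + 2 \<le> d" using less mm by simp
        show "\<forall>i\<in>{1..d}. P d (Suc m2) x i = kap d (Suc m2) x * w d (Suc m2) x i"
          using less.IH[of "Suc m2"] mm less x1 by auto
      qed
      show ?thesis unfolding mm by (rule C_step[OF _ x Bm Bm1]) (use less mm in auto)
    qed
  qed
qed

lemma B_all: "m + 2 \<le> d \<Longrightarrow> x \<in> Lset d (Suc m) \<Longrightarrow> i \<in> {1..d} \<Longrightarrow> P d m x i = (if i = d - m then b d m x else 0)"
proof (rule B_from_C)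
  assume d: "m + 2 \<le> d" and x: "x \<in> Lset d (Suc m)"
  have x': "x \<in> Lset d m" by (rule L_mono[OF _ x]) simp
  show "1 \<le> m \<Longrightarrow> \<forall>i\<in>{1..d}. P d m x i = kap d m x * w d m x i"
    using C_all[OF _ _ x'] d by auto
qed

definition fn :: "nat \<Rightarrow> nat \<Rightarrow> pt \<Rightarrow> complex" where
  "fn d k x = (if k = 1 then nrm d (P d 0 x) else nrm d (P d (k - 1) x) * (D d (k - 2) x)\<^sup>2)"
definition qn :: "nat \<Rightarrow> nat \<Rightarrow> pt \<Rightarrow> complex" where
  "qn d k x = (if k = 1 then 1 else (D d (k - 1) x)\<^sup>2 * nrm d (P d (k - 2) x))"

lemma restr: assumes m: "1 \<le> m" "m + 1 \<le> d" and x: "x \<in> Lset d m"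
  shows "fn d (Suc m) x = nrm d (w d m x) * qn d (Suc m) x"
proof -
  obtain n where n: "m = Suc n" using m by (cases m) auto
  have C: "P d m x i = kap d m x * w d m x i" if "i \<in> {1..d}" for i using C_all[OF m x that] .
  have "nrm d (P d m x) = (kap d m x)\<^sup>2 * nrm d (w d m x)"
    unfolding nrm_def by (simp add: C power_mult_distrib sum_distrib_left)
  moreover have "nrm d (P d n x) = (b d n x)\<^sup>2"
    by (rule nrm_single[OF _ B_all]) (use m n x in auto)
  moreover have "kap d m x * D d n x = D d m x * b d n x" using inv[of d n x] n by simp
  ultimately show ?thesis using n m unfolding fn_def qn_def
    by (simp add: power_mult_distrib[symmetric] mult_ac)
qed



section \<open>Lines and rational functions\<close>

definition line :: "pt \<Rightarrow> pt \<Rightarrow> complex \<Rightarrow> pt" where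
  "line x y t = ((\<lambda>i. fst x i + t * (fst y i - fst x i)), (\<lambda>i j. snd x i j + t * (snd y i j - snd x i j)))"

lemma line0: "line x y 0 = x" by (cases x) (simp add: line_def)
lemma line1: "line x y 1 = y" by (cases y) (simp add: line_def)

lemma pf_line: "p \<in> polyfun d \<Longrightarrow> \<exists>q. \<forall>t. p (line x y t) = poly q t"
proof (induction p rule: polyfun.induct)
  case (pconst c)
  show ?case by (rule exI[of _ "[:c:]"]) simp
next
  case (pvec i)
  show ?case by (rule exI[of _ "[:fst x i, fst y i - fst x i:]"]) (simp add: line_def mult.commute)
next
  case (pmat i j)
  show ?case by (rule exI[of _ "[:snd x i j, snd y i j - snd x i j:]"]) (simp add: line_def mult.commute)
next
  case (padd p q)
  then obtain a b where "\<forall>t. p (line x y t) = poly a t" "\<forall>t. q (line x y t) = poly b t" by blast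
  then show ?case by (intro exI[of _ "a + b"]) simp
next
  case (pmult p q)
  then obtain a b where "\<forall>t. p (line x y t) = poly a t" "\<forall>t. q (line x y t) = poly b t" by blast
  then show ?case by (intro exI[of _ "a * b"]) simp
qed

lemma zero_on_S: assumes S: "\<And>x y t. x \<in> S \<Longrightarrow> y \<in> S \<Longrightarrow> line x y t \<in> S"
  and h: "h \<in> polyfun d" and e: "e \<in> polyfun d" and he: "\<And>y. y \<in> S \<Longrightarrow> h y * e y = 0"
  and y0: "y0 \<in> S" "e y0 \<noteq> 0" and x: "x \<in> S"
  shows "h x = 0"
proof -
  obtain qh where qh: "\<forall>t. h (line x y0 t) = poly qh t" using pf_line[OF h] by blast
  obtain qe where qe: "\<forall>t. e (line x y0 t) = poly qe t" using pf_line[OF e] by blast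
  have "\<forall>t. poly (qh * qe) t = 0"
  proof
    fix t
    have "h (line x y0 t) * e (line x y0 t) = 0" by (rule he[OF S[OF x y0(1)]])
    then show "poly (qh * qe) t = 0" using qh qe by simp
  qed
  then have "qh * qe = 0" using poly_all_0_iff_0 by blast
  moreover have "qe \<noteq> 0" using qe[rule_format, of 1] y0 by (auto simp: line1)
  ultimately have "qh = 0" by simp
  then show ?thesis using qh[rule_format, of 0] by (simp add: line0)
qed

lemma rat_equiv_refl: "ratfun d F \<Longrightarrow> rat_equiv d F F"
  unfolding rat_equiv_def by (simp add: mult.commute)

lemma reval_own: assumes F: "ratfun d F" and x: "x \<in> Vsp d" and q: "snd F x \<noteq> 0"
  shows "x \<in> rdom d F" "reval d F x = fst F x / snd F x"
proof -
  show "x \<in> rdom d F" unfolding rdom_def using x q rat_equiv_refl[OF F] by blast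
  have ex: "\<exists>c. \<exists>g. rat_equiv d F g \<and> snd g x \<noteq> 0 \<and> c = fst g x / snd g x"
    using q rat_equiv_refl[OF F] by blast
  obtain g where g: "rat_equiv d F g" "snd g x \<noteq> 0" "reval d F x = fst g x / snd g x"
    using someI_ex[OF ex] unfolding reval_def by blast
  have "fst F x * snd g x = fst g x * snd F x" using g(1) x unfolding rat_equiv_def by blast
  then have "fst g x = fst F x * snd g x / snd F x" using q by (simp add: eq_divide_eq)
  then show "reval d F x = fst F x / snd F x" using g(2,3) by simp
qed

lemma reval_restr: assumes F: "ratfun d F" and phi: "phi \<in> polyfun d"
  and SV: "S \<subseteq> Vsp d" and S: "\<And>x y t. x \<in> S \<Longrightarrow> y \<in> S \<Longrightarrow> line x y t \<in> S"
  and y0: "y0 \<in> S" "snd F y0 \<noteq> 0" and eq: "\<And>y. y \<in> S \<Longrightarrow> fst F y = phi y * snd F y"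
  and x: "x \<in> S" "x \<in> rdom d F"
  shows "reval d F x = phi x"
proof -
  have ex: "\<exists>c. \<exists>g. rat_equiv d F g \<and> snd g x \<noteq> 0 \<and> c = fst g x / snd g x"
    using x(2) unfolding rdom_def by blast
  obtain g where g: "rat_equiv d F g" "snd g x \<noteq> 0" "reval d F x = fst g x / snd g x"
    using someI_ex[OF ex] unfolding reval_def by blast
  have gr: "fst g \<in> polyfun d" "snd g \<in> polyfun d" using g(1) unfolding rat_equiv_def ratfun_def by auto
  have Fr: "snd F \<in> polyfun d" using F unfolding ratfun_def by auto
  have h: "(\<lambda>y. phi y * snd g y - fst g y) \<in> polyfun d"
    by (rule pf_diff[OF pf_mult[OF phi gr(2)] gr(1)])
  have "(\<lambda>y. phi y * snd g y - fst g y) x = 0"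
  proof (rule zero_on_S[OF S h Fr _ y0 x(1)])
    fix y assume y: "y \<in> S"
    have "fst F y * snd g y = fst g y * snd F y" using g(1) SV y unfolding rat_equiv_def by blast
    then show "(phi y * snd g y - fst g y) * snd F y = 0" using eq[OF y] by (simp add: algebra_simps)
  qed
  then have "fst g x = phi x * snd g x" by simp
  then show ?thesis using g(2,3) by simp
qed

lemma line_V: assumes x: "x \<in> Vsp d" and y: "y \<in> Vsp d" shows "line x y t \<in> Vsp d"
proof -
  have 1: "\<forall>i. i \<notin> {1..d} \<longrightarrow> fst (line x y t) i = 0"
    using V_vec[OF x] V_vec[OF y] by (simp add: line_def)
  have 2: "\<forall>i j. snd (line x y t) i j = - snd (line x y t) j i"
  proof (intro allI)
    fix i j
    have "snd x i j = - snd x j i" "snd y i j = - snd y j i" by (rule V_sk[OF x], rule V_sk[OF y])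
    then show "snd (line x y t) i j = - snd (line x y t) j i" by (simp add: line_def algebra_simps)
  qed
  have 3: "\<forall>i j. i \<notin> {1..d} \<or> j \<notin> {1..d} \<longrightarrow> snd (line x y t) i j = 0"
    using V_mat[OF x] V_mat[OF y] by (simp add: line_def)
  show ?thesis unfolding Vsp_iff using 1 2 3 by blast
qed

lemma line_L: assumes x: "x \<in> Lset d m" and y: "y \<in> Lset d m" shows "line x y t \<in> Lset d m"
  using x y line_V[OF L_V[OF x] L_V[OF y]] unfolding L_iff by (simp add: line_def)

section \<open>The invariants\<close>

definition Ff :: "nat \<Rightarrow> nat \<Rightarrow> (pt \<Rightarrow> complex) \<times> (pt \<Rightarrow> complex)" where
  "Ff d k = (fn d k, qn d k)"

lemma pf_fn: assumes "1 \<le> k" shows "fn d k \<in> polyfun d" "qn d k \<in> polyfun d"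
proof -
  have "fn d k \<in> polyfun d \<and> qn d k \<in> polyfun d"
  proof (cases "k = 1")
    case True
    have e1: "fn d k = (\<lambda>x. nrm d (P d 0 x))" by (rule ext) (simp add: fn_def True)
    have e2: "qn d k = (\<lambda>x. 1)" by (rule ext) (simp add: qn_def True)
    show ?thesis unfolding e1 e2 by (intro conjI pf_nP pf_const)
  next
    case False
    have e1: "fn d k = (\<lambda>x. nrm d (P d (k - 1) x) * (D d (k - 2) x)\<^sup>2)" by (rule ext) (use False in \<open>simp add: fn_def One_nat_def\<close>)
    have e2: "qn d k = (\<lambda>x. (D d (k - 1) x)\<^sup>2 * nrm d (P d (k - 2) x))" by (rule ext) (use False in \<open>simp add: qn_def One_nat_def\<close>)
    show ?thesis unfolding e1 e2 by (intro conjI pf_mult[OF pf_nP pf_pow[OF pf_D]] pf_mult[OF pf_pow[OF pf_D] pf_nP])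
  qed
  then show "fn d k \<in> polyfun d" "qn d k \<in> polyfun d" by simp_all
qed

lemma fn_inv: "A \<in> Od d \<Longrightarrow> x \<in> Vsp d \<Longrightarrow> fn d k (act d A x) = fn d k x"
  by (simp add: fn_def nP_inv D_inv)
lemma qn_inv: "A \<in> Od d \<Longrightarrow> x \<in> Vsp d \<Longrightarrow> qn d k (act d A x) = qn d k x"
  by (simp add: qn_def nP_inv D_inv)

definition Ud :: "nat \<Rightarrow> pt set" where
  "Ud d = {x \<in> Vsp d. \<forall>j<d. D d j x \<noteq> 0 \<and> nrm d (P d j x) \<noteq> 0}"

lemma Ud_inv: "A \<in> Od d \<Longrightarrow> x \<in> Ud d \<Longrightarrow> act d A x \<in> Ud d"
  unfolding Ud_def by (simp add: act_V nP_inv D_inv)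

lemma Ud_fq: assumes x: "x \<in> Ud d" and k: "k \<in> {1..d}" shows "fn d k x \<noteq> 0" "qn d k x \<noteq> 0"
proof -
  have h: "\<And>j. j < d \<Longrightarrow> D d j x \<noteq> 0 \<and> nrm d (P d j x) \<noteq> 0" using x unfolding Ud_def by blast
  have k1: "k - 1 < d" "k - 2 < d" "0 < d" using k by auto
  note h1 = h[OF k1(1)] and h2 = h[OF k1(2)] and h0 = h[OF k1(3)]
  show "fn d k x \<noteq> 0" using h1 h2 h0 k by (auto simp: fn_def)
  show "qn d k x \<noteq> 0" using h1 h2 h0 k by (auto simp: qn_def)
qed

lemma Ud_zar: "zariski_open d (Ud d)"
proof -
  have p: "(\<lambda>x. \<Prod>j\<in>{..<d}. D d j x * nrm d (P d j x)) \<in> polyfun d"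
    by (rule pf_prod) (simp, rule pf_mult[OF pf_D pf_nP])
  have "Ud d = {x \<in> Vsp d. \<exists>p\<in>{(\<lambda>x. \<Prod>j\<in>{..<d}. D d j x * nrm d (P d j x))}. p x \<noteq> 0}"
    unfolding Ud_def by auto
  then show ?thesis unfolding zariski_open_def using p by blast
qed



lemma nrmP: assumes m: "1 \<le> m" "m + 1 \<le> d" and x: "x \<in> Lset d m"
  shows "nrm d (P d m x) = (kap d m x)\<^sup>2 * nrm d (w d m x)"
proof -
  have C: "P d m x i = kap d m x * w d m x i" if "i \<in> {1..d}" for i using C_all[OF m x that] .
  show ?thesis unfolding nrm_def by (simp add: C power_mult_distrib sum_distrib_left)
qed

definition x0 :: "nat \<Rightarrow> pt" where
  "x0 d = ((\<lambda>i. if i = d then 1 else 0),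
     (\<lambda>i j. if 1 \<le> i \<and> j = i + 1 \<and> j \<le> d then 1 else if 1 \<le> j \<and> i = j + 1 \<and> i \<le> d then -1 else 0))"

lemma x0_V: "1 \<le> d \<Longrightarrow> x0 d \<in> Vsp d"
  unfolding Vsp_iff x0_def by auto

lemma x0_L: assumes d: "2 \<le> d" shows "x0 d \<in> Lset d (d - 1)"
  unfolding L_iff using x0_V[of d] d by (auto simp: x0_def)

lemma w_x0: assumes m: "1 \<le> m" "m + 1 \<le> d" and i: "i \<in> {1..d}"
  shows "w d m (x0 d) i = (if i = d - m then 1 else 0)"
  using m i by (auto simp: w_def E_def x0_def)

lemma nrm_w_x0: "1 \<le> m \<Longrightarrow> m + 1 \<le> d \<Longrightarrow> nrm d (w d m (x0 d)) = 1"
  using nrm_single[of "d - m" d "w d m (x0 d)" 1] w_x0 by auto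

lemma x0_nz: assumes d: "2 \<le> d"
  shows "j < d \<Longrightarrow> D d j (x0 d) \<noteq> 0 \<and> nrm d (P d j (x0 d)) \<noteq> 0 \<and> (1 \<le> j \<longrightarrow> kap d j (x0 d) \<noteq> 0)"
proof (induction j rule: less_induct)
  case (less j)
  have xL: "x0 d \<in> Lset d j" if "j \<le> d - 1" for j by (rule L_mono[OF that x0_L[OF d]])
  have nP: "nrm d (P d j (x0 d)) = (kap d j (x0 d))\<^sup>2" if "1 \<le> j" "j < d" for j
    using nrmP[OF that(1) _ xL] nrm_w_x0[OF that(1)] that by simp
  show ?case
  proof (cases j)
    case 0
    have "nrm d (P d 0 (x0 d)) = 1\<^sup>2"
      by (rule nrm_single[of d d _ 1]) (use d in \<open>auto simp: P0 x0_def\<close>)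
    then show ?thesis using 0 by (simp add: D0)
  next
    case (Suc j1)
    show ?thesis
    proof (cases j1)
      case 0
      then show ?thesis using Suc nP[of 1] less d by (simp add: D1 x0_def)
    next
      case (Suc n)
      have j: "j = Suc (Suc n)" using Suc \<open>j = Suc j1\<close> by simp
      have ih0: "D d n (x0 d) \<noteq> 0 \<and> nrm d (P d n (x0 d)) \<noteq> 0" using less.IH[of n] less j by simp
      have ih1: "D d (Suc n) (x0 d) \<noteq> 0 \<and> kap d (Suc n) (x0 d) \<noteq> 0" using less.IH[of "Suc n"] less j by simp
      have Dn: "D d j (x0 d) \<noteq> 0" using ih0 ih1 j by (simp add: DSS)
      have e: "E (x0 d) (d - Suc n) (d - Suc n + 1) = 1" using less j by (auto simp: E_def x0_def)
      have k: "kap d j (x0 d) \<noteq> 0" using ih0 ih1 j e by simp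
      show ?thesis using Dn k nP[of j] less j by simp
    qed
  qed
qed

lemma x0_Ud: "2 \<le> d \<Longrightarrow> x0 d \<in> Ud d"
  unfolding Ud_def using x0_nz x0_V by auto

lemma ratfun_Ff: assumes d: "2 \<le> d" and k: "k \<in> {1..d}" shows "ratfun d (Ff d k)"
  unfolding ratfun_def Ff_def using pf_fn[of k d] k x0_V[of d] Ud_fq(2)[OF x0_Ud[OF d] k] d by auto

lemma ratinv_Ff: "rat_invariant d (Ff d k)"
  unfolding rat_invariant_def Ff_def by (simp add: fn_inv qn_inv)

lemma reval_Ff: "2 \<le> d \<Longrightarrow> k \<in> {1..d} \<Longrightarrow> x \<in> Vsp d \<Longrightarrow> qn d k x \<noteq> 0 \<Longrightarrow>
   x \<in> rdom d (Ff d k) \<and> reval d (Ff d k) x = fn d k x / qn d k x"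
  using reval_own[OF ratfun_Ff, of d k x] by (simp add: Ff_def)

lemma U_eq: assumes d: "2 \<le> d"
  shows "{x \<in> Vsp d. (\<forall>k\<in>{1..d}. x \<in> rdom d (Ff d k)) \<and> (\<Prod>k=1..d. reval d (Ff d k) x) \<noteq> 0} = Ud d"
proof
  show "Ud d \<subseteq> {x \<in> Vsp d. (\<forall>k\<in>{1..d}. x \<in> rdom d (Ff d k)) \<and> (\<Prod>k=1..d. reval d (Ff d k) x) \<noteq> 0}"
  proof
    fix x assume x: "x \<in> Ud d"
    have xV: "x \<in> Vsp d" using x unfolding Ud_def by blast
    have r: "x \<in> rdom d (Ff d k) \<and> reval d (Ff d k) x = fn d k x / qn d k x" if "k \<in> {1..d}" for k
      using reval_Ff[OF d that xV Ud_fq(2)[OF x that]] .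
    have "reval d (Ff d k) x \<noteq> 0" if "k \<in> {1..d}" for k
      using r[OF that] Ud_fq[OF x that] by simp
    then have "(\<Prod>k=1..d. reval d (Ff d k) x) \<noteq> 0" by (simp add: prod_zero_iff)
    then show "x \<in> {x \<in> Vsp d. (\<forall>k\<in>{1..d}. x \<in> rdom d (Ff d k)) \<and> (\<Prod>k=1..d. reval d (Ff d k) x) \<noteq> 0}"
      using r xV by blast
  qed
next
  show "{x \<in> Vsp d. (\<forall>k\<in>{1..d}. x \<in> rdom d (Ff d k)) \<and> (\<Prod>k=1..d. reval d (Ff d k) x) \<noteq> 0} \<subseteq> Ud d"
  proof
    fix x assume "x \<in> {x \<in> Vsp d. (\<forall>k\<in>{1..d}. x \<in> rdom d (Ff d k)) \<and> (\<Prod>k=1..d. reval d (Ff d k) x) \<noteq> 0}"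
    then have xV: "x \<in> Vsp d" and pr: "(\<Prod>k=1..d. reval d (Ff d k) x) \<noteq> 0" by auto
    have rv: "reval d (Ff d k) x \<noteq> 0" if "k \<in> {1..d}" for k
      using pr that by (simp add: prod_zero_iff)
    have fq: "fn d k x \<noteq> 0" if "k \<in> {1..d}" "qn d k x \<noteq> 0" for k
      using reval_Ff[OF d that(1) xV that(2)] rv[OF that(1)] by auto
    have "j < d \<Longrightarrow> D d j x \<noteq> 0 \<and> nrm d (P d j x) \<noteq> 0" for j
    proof (induction j rule: less_induct)
      case (less j)
      show ?case
      proof (cases j)
        case 0
        have "fn d 1 x \<noteq> 0" by (rule fq) (use d in \<open>auto simp: qn_def\<close>)
        then show ?thesis using 0 by (simp add: D0 fn_def)
      next
        case (Suc j1)
        show ?thesis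
        proof (cases j1)
          case 0
          have n0: "nrm d (P d 0 x) \<noteq> 0" using less.IH[of 0] Suc less by simp
          have "fn d 2 x \<noteq> 0" by (rule fq) (use d n0 in \<open>auto simp: qn_def D1\<close>)
          then show ?thesis using Suc 0 by (simp add: D1 D0 fn_def)
        next
          case (Suc n)
          have j: "j = Suc (Suc n)" using Suc \<open>j = Suc j1\<close> by simp
          have ih0: "D d n x \<noteq> 0 \<and> nrm d (P d n x) \<noteq> 0" using less.IH[of n] less j by simp
          have ih1: "D d (Suc n) x \<noteq> 0 \<and> nrm d (P d (Suc n) x) \<noteq> 0" using less.IH[of "Suc n"] less j by simp
          have Dj: "D d j x \<noteq> 0" using ih0 ih1 j by (simp add: DSS)
          have q: "qn d (Suc j) x \<noteq> 0" using Dj ih1 j by (simp add: qn_def)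
          have "fn d (Suc j) x \<noteq> 0" by (rule fq[OF _ q]) (use less in auto)
          then show ?thesis using Dj j ih1 by (simp add: fn_def)
        qed
      qed
    qed
    then show "x \<in> Ud d" unfolding Ud_def using xV by blast
  qed
qed



definition mm :: "nat \<Rightarrow> (nat \<Rightarrow> nat \<Rightarrow> complex) \<Rightarrow> (nat \<Rightarrow> nat \<Rightarrow> complex) \<Rightarrow> nat \<Rightarrow> nat \<Rightarrow> complex" where
  "mm d B A = (\<lambda>i j. \<Sum>k=1..d. B i k * A k j)"

lemma mm_Od: assumes A: "A \<in> Od d" and B: "B \<in> Od d" shows "mm d B A \<in> Od d"
proof -
  have z: "\<forall>i j. i \<notin> {1..d} \<or> j \<notin> {1..d} \<longrightarrow> mm d B A i j = 0"
    by (auto simp: mm_def Od_zero[OF A] Od_zero[OF B])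
  have o: "(\<Sum>k=1..d. mm d B A i k * mm d B A j k) = (if i = j then 1 else 0)"
    if i: "i \<in> {1..d}" and j: "j \<in> {1..d}" for i j
  proof -
    have "(\<Sum>k=1..d. mm d B A i k * mm d B A j k) = (\<Sum>k=1..d. \<Sum>q=1..d. \<Sum>p=1..d. B i p * B j q * (A p k * A q k))"
      by (simp add: mm_def sum_distrib_left sum_distrib_right mult_ac)
    also have "\<dots> = (\<Sum>k=1..d. \<Sum>p=1..d. \<Sum>q=1..d. B i p * B j q * (A p k * A q k))"
      by (rule sum.cong[OF refl], rule sum.swap)
    also have "\<dots> = (\<Sum>p=1..d. \<Sum>k=1..d. \<Sum>q=1..d. B i p * B j q * (A p k * A q k))" by (rule sum.swap)
    also have "\<dots> = (\<Sum>p=1..d. \<Sum>q=1..d. \<Sum>k=1..d. B i p * B j q * (A p k * A q k))"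
      by (rule sum.cong[OF refl], rule sum.swap)
    also have "\<dots> = (\<Sum>p=1..d. \<Sum>q=1..d. B i p * B j q * (if p = q then 1 else 0))"
    proof (intro sum.cong refl)
      fix p q assume p: "p \<in> {1..d}" and q: "q \<in> {1..d}"
      show "(\<Sum>k=1..d. B i p * B j q * (A p k * A q k)) = B i p * B j q * (if p = q then 1 else 0)"
        using Od_rows[OF A p q] by (simp add: sum_distrib_left[symmetric])
    qed
    also have "\<dots> = (\<Sum>p=1..d. B i p * B j p)"
    proof (rule sum.cong[OF refl])
      fix p assume p: "p \<in> {1..d}"
      have "(\<Sum>q=1..d. B i p * B j q * (if p = q then 1 else 0)) = (\<Sum>q=1..d. if p = q then B i p * B j q else 0)"
        by (rule sum.cong) auto
      then show "(\<Sum>q=1..d. B i p * B j q * (if p = q then 1 else 0)) = B i p * B j p" using p by simp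
    qed
    also have "\<dots> = (if i = j then 1 else 0)" by (rule Od_rows[OF B i j])
    finally show ?thesis .
  qed
  show ?thesis unfolding Od_def using z o by blast
qed

lemma act_mm: assumes x: "x \<in> Vsp d" shows "act d B (act d A x) = act d (mm d B A) x"
proof -
  have 1: "fst (act d B (act d A x)) = fst (act d (mm d B A) x)"
  proof
    fix i
    have "fst (act d B (act d A x)) i = (\<Sum>k=1..d. \<Sum>l=1..d. B i k * A k l * fst x l)"
      by (simp add: act_fst Av_def sum_distrib_left mult_ac)
    also have "\<dots> = (\<Sum>l=1..d. \<Sum>k=1..d. B i k * A k l * fst x l)" by (rule sum.swap)
    also have "\<dots> = fst (act d (mm d B A) x) i"
      by (simp add: act_fst Av_def mm_def sum_distrib_right)
    finally show "fst (act d B (act d A x)) i = fst (act d (mm d B A) x) i" .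
  qed
  have 2: "snd (act d B (act d A x)) = snd (act d (mm d B A) x)"
  proof (intro ext)
    fix i j
    let ?f = "\<lambda>k l p q. B i k * A k p * snd x p q * A l q * B j l"
    have "snd (act d B (act d A x)) i j = (\<Sum>k=1..d. \<Sum>l=1..d. \<Sum>p=1..d. \<Sum>q=1..d. ?f k l p q)"
      by (simp add: act_snd sum_distrib_left sum_distrib_right mult_ac)
    also have "\<dots> = (\<Sum>k=1..d. \<Sum>p=1..d. \<Sum>l=1..d. \<Sum>q=1..d. ?f k l p q)"
      by (rule sum.cong[OF refl], rule sum.swap)
    also have "\<dots> = (\<Sum>k=1..d. \<Sum>p=1..d. \<Sum>q=1..d. \<Sum>l=1..d. ?f k l p q)"
      by (rule sum.cong[OF refl], rule sum.cong[OF refl], rule sum.swap)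
    also have "\<dots> = (\<Sum>p=1..d. \<Sum>k=1..d. \<Sum>q=1..d. \<Sum>l=1..d. ?f k l p q)"
      by (rule sum.swap)
    also have "\<dots> = (\<Sum>p=1..d. \<Sum>q=1..d. \<Sum>k=1..d. \<Sum>l=1..d. ?f k l p q)"
      by (rule sum.cong[OF refl], rule sum.swap)
    also have "\<dots> = snd (act d (mm d B A) x) i j"
      by (simp add: act_snd mm_def sum_distrib_left sum_distrib_right mult_ac)
    finally show "snd (act d B (act d A x)) i j = snd (act d (mm d B A) x) i j" .
  qed
  show ?thesis using 1 2 by (simp add: prod_eq_iff)
qed

section \<open>Householder reflections\<close>

definition hh :: "nat \<Rightarrow> (nat \<Rightarrow> complex) \<Rightarrow> nat \<Rightarrow> nat \<Rightarrow> complex" where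
  "hh d u = (\<lambda>i j. if i \<in> {1..d} \<and> j \<in> {1..d} then (if i = j then 1 else 0) - 2 / nrm d u * u i * u j else 0)"

lemma hh_Od: assumes s: "nrm d u \<noteq> 0" shows "hh d u \<in> Od d"
proof -
  define c where "c = 2 / nrm d u"
  have cs: "c * c * nrm d u = 2 * c" using s by (simp add: c_def field_simps power2_eq_square)
  have z: "\<forall>i j. i \<notin> {1..d} \<or> j \<notin> {1..d} \<longrightarrow> hh d u i j = 0" by (auto simp: hh_def)
  have o: "(\<Sum>k=1..d. hh d u i k * hh d u j k) = (if i = j then 1 else 0)"
    if i: "i \<in> {1..d}" and j: "j \<in> {1..d}" for i j
  proof -
    have "(\<Sum>k=1..d. hh d u i k * hh d u j k) = (\<Sum>k=1..d. (if k = i then (if k = j then 1 else 0) - c * u j * u k else 0)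
       - (if k = j then c * u i * u k else 0) + c * c * u i * u j * (u k)\<^sup>2)"
      by (rule sum.cong[OF refl]) (use i j in \<open>auto simp: hh_def c_def algebra_simps power2_eq_square\<close>)
    also have "\<dots> = ((if i = j then 1 else 0) - c * u j * u i) - c * u i * u j + c * c * u i * u j * nrm d u"
      using i j by (simp add: sum.distrib sum_subtractf sum_distrib_left nrm_def)
    also have "\<dots> = (if i = j then 1 else 0)"
    proof -
      have "c * c * u i * u j * nrm d u = (c * c * nrm d u) * (u i * u j)" by (simp only: mult_ac)
      then have e: "c * c * u i * u j * nrm d u = 2 * c * (u i * u j)" using cs by simp
      show ?thesis by (simp only: e) (simp add: algebra_simps)
    qed
    finally show ?thesis .
  qed
  show ?thesis unfolding Od_def using z o by blast
qed

lemma hh_fst: assumes k: "k \<in> {1..d}"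
  shows "fst (act d (hh d u) y) k = fst y k - 2 / nrm d u * u k * (\<Sum>p=1..d. u p * fst y p)"
proof -
  have "fst (act d (hh d u) y) k = (\<Sum>p=1..d. (if p = k then fst y p else 0) - 2 / nrm d u * u k * (u p * fst y p))"
    by (simp add: act_fst Av_def) (rule sum.cong[OF refl], use k in \<open>auto simp: hh_def algebra_simps\<close>)
  also have "\<dots> = fst y k - 2 / nrm d u * u k * (\<Sum>p=1..d. u p * fst y p)"
    using k by (simp add: sum_subtractf sum_distrib_left)
  finally show ?thesis .
qed

lemma hh_snd: assumes k: "k \<in> {1..d}" and j: "j \<in> {1..d}" and uj: "u j = 0"
  shows "snd (act d (hh d u) y) k j = snd y k j - 2 / nrm d u * u k * (\<Sum>p=1..d. u p * snd y p j)"
proof -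
  have hj: "hh d u j q = (if j = q then 1 else 0)" if "q \<in> {1..d}" for q
    using j that uj by (simp add: hh_def)
  have "snd (act d (hh d u) y) k j = (\<Sum>p=1..d. \<Sum>q=1..d. hh d u k p * snd y p q * (if j = q then 1 else 0))"
    by (simp add: act_snd hj)
  also have "\<dots> = (\<Sum>p=1..d. hh d u k p * snd y p j)"
    using j by (simp add: if_distrib[of "\<lambda>t. _ * t"] cong: if_cong)
  also have "\<dots> = (\<Sum>p=1..d. (if p = k then snd y p j else 0) - 2 / nrm d u * u k * (u p * snd y p j))"
    by (rule sum.cong[OF refl]) (use k in \<open>auto simp: hh_def algebra_simps\<close>)
  also have "\<dots> = snd y k j - 2 / nrm d u * u k * (\<Sum>p=1..d. u p * snd y p j)"
    using k by (simp add: sum_subtractf sum_distrib_left)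
  finally show ?thesis .
qed



definition ww :: "nat \<Rightarrow> nat \<Rightarrow> pt \<Rightarrow> nat \<Rightarrow> complex" where
  "ww d m y = (if m = 0 then (\<lambda>i. if 1 \<le> i \<and> i \<le> d then fst y i else 0) else w d m y)"

lemma step: assumes d: "m + 2 \<le> d" and y: "y \<in> Lset d m" and nw: "nrm d (ww d m y) \<noteq> 0"
  shows "\<exists>B\<in>Od d. act d B y \<in> Lset d (Suc m)"
proof -
  define n where "n = d - m"
  define z where "z = ww d m y"
  have n2: "2 \<le> n" "n \<le> d" "n \<in> {1..d}" using d by (auto simp: n_def)
  have zs: "z i = 0" if "i = 0 \<or> n < i" for i using that by (auto simp: z_def ww_def w_def n_def)
  have yV: "y \<in> Vsp d" by (rule L_V[OF y])
  define s0 where "s0 = csqrt (nrm d z)"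
  have s0: "s0\<^sup>2 = nrm d z" "s0 \<noteq> 0" using nw by (auto simp: s0_def z_def)
  define sg where "sg = (if s0 = z n then - s0 else s0)"
  have sg: "sg\<^sup>2 = nrm d z" "sg \<noteq> z n" "sg \<noteq> 0" using s0 by (auto simp: sg_def)
  define u where "u = (\<lambda>i. if 1 \<le> i \<and> i \<le> d then z i - (if i = n then sg else 0) else 0)"
  have us: "u i = 0" if "n < i" for i using that zs[of i] by (auto simp: u_def)
  have uin: "u i = z i - (if i = n then sg else 0)" if "i \<in> {1..d}" for i using that by (simp add: u_def)
  have uz: "(\<Sum>p=1..d. u p * z p) = sg\<^sup>2 - sg * z n"
  proof -
    have "(\<Sum>p=1..d. u p * z p) = (\<Sum>p=1..d. (z p)\<^sup>2 - (if p = n then sg * z p else 0))"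
      by (rule sum.cong[OF refl]) (auto simp: uin power2_eq_square algebra_simps)
    also have "\<dots> = nrm d z - sg * z n" using n2 by (simp add: sum_subtractf nrm_def)
    finally show ?thesis using sg(1) by simp
  qed
  have s: "nrm d u = 2 * (sg\<^sup>2 - sg * z n)"
  proof -
    have "nrm d u = (\<Sum>p=1..d. (z p)\<^sup>2 - (if p = n then 2 * sg * z p - sg\<^sup>2 else 0))"
      unfolding nrm_def by (rule sum.cong[OF refl]) (auto simp: uin power2_eq_square algebra_simps)
    also have "\<dots> = nrm d z - (2 * sg * z n - sg\<^sup>2)" using n2 by (simp add: sum_subtractf nrm_def)
    finally show ?thesis using sg(1) by simp
  qed
  have sne: "nrm d u \<noteq> 0"
  proof -
    have "sg\<^sup>2 - sg * z n = sg * (sg - z n)" by (simp add: power2_eq_square algebra_simps)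
    then show ?thesis using s sg by simp
  qed
  have cu0: "nrm d u = 2 * (\<Sum>p=1..d. u p * z p)" using s uz by simp
  have cu1: "(\<Sum>p=1..d. u p * z p) \<noteq> 0" using sne cu0 by auto
  have cu: "2 / nrm d u * (\<Sum>p=1..d. u p * z p) = 1" unfolding cu0 using cu1 by simp
  define B where "B = hh d u"
  have B: "B \<in> Od d" unfolding B_def by (rule hh_Od[OF sne])
  have V: "act d B y \<in> Vsp d" by (rule act_V[OF B yV])
  have vec: "\<forall>k\<in>{1..d-1}. fst (act d B y) k = 0"
  proof
    fix k assume k: "k \<in> {1..d-1}"
    have kd: "k \<in> {1..d}" using k by auto
    have "fst (act d B y) k = fst y k - 2 / nrm d u * u k * (\<Sum>p=1..d. u p * fst y p)"
      unfolding B_def by (rule hh_fst[OF kd])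
    also have "\<dots> = 0"
    proof (cases "m = 0")
      case True
      have zy: "z p = fst y p" if "p \<in> {1..d}" for p using that True by (simp add: z_def ww_def)
      have "(\<Sum>p=1..d. u p * fst y p) = (\<Sum>p=1..d. u p * z p)" by (rule sum.cong) (simp_all add: zy)
      then have "2 / nrm d u * u k * (\<Sum>p=1..d. u p * fst y p) = u k" using cu by (simp add: mult_ac)
      moreover have "n = d" using True by (simp add: n_def)
      ultimately show ?thesis using k kd uin[OF kd] zy[OF kd] by auto
    next
      case False
      have fy: "fst y p = 0" if "1 \<le> p" "p < d" for p by (rule vecz[OF y]) (use False that in auto)
      have "(\<Sum>p=1..d. u p * fst y p) = 0"
      proof (rule sum.neutral, rule ballI)
        fix p assume p: "p \<in> {1..d}"
        show "u p * fst y p = 0"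
        proof (cases "p = d")
          case True
          then show ?thesis using us[of p] False d by (simp add: n_def)
        next
          case False
          then show ?thesis using fy[of p] p by simp
        qed
      qed
      moreover have "fst y k = 0" by (rule fy) (use k d in auto)
      ultimately show ?thesis by simp
    qed
    finally show "fst (act d B y) k = 0" .
  qed
  have mat: "\<forall>i\<in>{2..Suc m}. \<forall>k\<in>{1..d-i}. snd (act d B y) k (d + 2 - i) = 0"
  proof (intro ballI)
    fix i k assume i: "i \<in> {2..Suc m}" and k: "k \<in> {1..d-i}"
    define j where "j = d + 2 - i"
    have j: "j \<in> {1..d}" "n < j" "k + 2 \<le> j" "1 \<le> k" using i k d by (auto simp: j_def n_def)
    have kd: "k \<in> {1..d}" using k by auto
    have "snd (act d B y) k j = snd y k j - 2 / nrm d u * u k * (\<Sum>p=1..d. u p * snd y p j)"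
      unfolding B_def by (rule hh_snd[where u=u, OF kd j(1) us[OF j(2)]])
    also have "\<dots> = 0"
    proof (cases "i \<le> m")
      case True
      have jj: "d - m + 2 \<le> j" using True i d by (auto simp: j_def)
      have c0: "snd y p j = 0" if "1 \<le> p" "p + 2 \<le> j" for p by (rule colz[OF y _ jj that]) (use j in auto)
      have "(\<Sum>p=1..d. u p * snd y p j) = 0"
      proof (rule sum.neutral, rule ballI)
        fix p assume p: "p \<in> {1..d}"
        show "u p * snd y p j = 0"
        proof (cases "p + 2 \<le> j")
          case True
          then show ?thesis using c0[of p] p by simp
        next
          case False
          then have "n < p" using jj j by (auto simp: n_def)
          then show ?thesis using us by simp
        qed
      qed
      then show ?thesis using c0[OF j(4) j(3)] by simp
    next
      case False
      then have im: "i = Suc m" "1 \<le> m" using i by auto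
      have jn: "j = n + 1" using im d by (auto simp: j_def n_def)
      have yz: "snd y p j = z p" if "p \<in> {1..d}" "p \<le> n" for p
        using that im jn by (simp add: z_def ww_def w_def E_def n_def)
      have "(\<Sum>p=1..d. u p * snd y p j) = (\<Sum>p=1..d. u p * z p)"
      proof (rule sum.cong[OF refl])
        fix p assume p: "p \<in> {1..d}"
        show "u p * snd y p j = u p * z p"
        proof (cases "p \<le> n")
          case True
          then show ?thesis using yz[OF p] by simp
        next
          case False
          then show ?thesis using us[of p] by simp
        qed
      qed
      then have "2 / nrm d u * u k * (\<Sum>p=1..d. u p * snd y p j) = u k" using cu by (simp add: mult_ac)
      moreover have "k < n" using j jn by simp
      ultimately show ?thesis using yz[OF kd] uin[OF kd] by simp
    qed
    finally show "snd (act d B y) k (d + 2 - i) = 0" by (simp add: j_def)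
  qed
  have "act d B y \<in> Lset d (Suc m)" unfolding L_iff using V vec mat by blast
  then show ?thesis using B by blast
qed

lemma orbit_L: assumes d: "2 \<le> d" and x: "x \<in> Ud d"
  shows "\<exists>A\<in>Od d. act d A x \<in> Lset d (d - 1)"
proof -
  have xV: "x \<in> Vsp d" using x unfolding Ud_def by blast
  have "1 \<le> m \<Longrightarrow> m \<le> d - 1 \<Longrightarrow> \<exists>A\<in>Od d. act d A x \<in> Lset d m" for m
  proof (induction m)
    case 0
    then show ?case by simp
  next
    case (Suc m)
    show ?case
    proof (cases "m = 0")
      case True
      have "nrm d (ww d 0 x) = nrm d (P d 0 x)" by (rule nrm_cong) (simp add: ww_def P0)
      also have "\<dots> \<noteq> 0" using x d unfolding Ud_def by auto
      finally have nw: "nrm d (ww d 0 x) \<noteq> 0" .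
      obtain B where B: "B \<in> Od d" "act d B x \<in> Lset d (Suc 0)"
        using step[of 0 d x] nw d xV by auto
      then show ?thesis using True by blast
    next
      case False
      obtain A where A: "A \<in> Od d" "act d A x \<in> Lset d m" using Suc False by auto
      define y where "y = act d A x"
      have yU: "y \<in> Ud d" unfolding y_def by (rule Ud_inv[OF A(1) x])
      have yL: "y \<in> Lset d m" using A y_def by simp
      have "fn d (Suc m) y = nrm d (w d m y) * qn d (Suc m) y" by (rule restr[OF _ _ yL]) (use False Suc d in auto)
      moreover have "fn d (Suc m) y \<noteq> 0" by (rule Ud_fq(1)[OF yU]) (use Suc d in auto)
      ultimately have "nrm d (ww d m y) \<noteq> 0" using False by (auto simp: ww_def)
      moreover have "m + 2 \<le> d" using Suc.prems by auto
      ultimately obtain B where B: "B \<in> Od d" "act d B y \<in> Lset d (Suc m)"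
        using step[OF _ yL] by blast
      have "act d B y = act d (mm d B A) x" unfolding y_def by (rule act_mm[OF xV])
      then show ?thesis using B mm_Od[OF A(1) B(1)] by auto
    qed
  qed
  then show ?thesis using d by auto
qed



section \<open>Stabilizer\<close>

lemma diag_sum_r: fixes d :: nat and f :: "nat \<Rightarrow> complex" assumes "\<And>q. q \<noteq> j \<Longrightarrow> W j q = 0" "j \<notin> {1..d} \<Longrightarrow> W j j = 0"
  shows "(\<Sum>q=1..d. f q * W j q) = f j * W j j"
proof (cases "j \<in> {1..d}")
  case True
  show ?thesis
  proof (rule sum_single)
    show "finite {1..d}" by simp
    show "j \<in> {1..d}" by (rule True)
    fix l assume "l \<in> {1..d}" "l \<noteq> j"
    then show "f l * W j l = 0" using assms(1)[of l] by simp
  qed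
next
  case False
  then show ?thesis using assms by (auto intro!: sum.neutral)
qed

lemma diag_sum_l: fixes d :: nat and f :: "nat \<Rightarrow> complex" assumes "\<And>q. q \<noteq> j \<Longrightarrow> W j q = 0" "j \<notin> {1..d} \<Longrightarrow> W j j = 0"
  shows "(\<Sum>q=1..d. W j q * f q) = W j j * f j"
  using diag_sum_r[where W=W and j=j and d=d and f=f, OF assms] by (simp add: mult.commute)

lemma W_props: assumes W: "W \<in> Wd d"
  shows "\<And>p q. p \<noteq> q \<Longrightarrow> W p q = 0" "\<And>p. p \<notin> {1..d} \<Longrightarrow> W p p = 0"
    "\<And>p. p \<in> {1..d} \<Longrightarrow> W p p * W p p = 1"
proof -
  show "\<And>p q. p \<noteq> q \<Longrightarrow> W p q = 0" "\<And>p. p \<notin> {1..d} \<Longrightarrow> W p p = 0"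
    using W unfolding Wd_def by auto
  fix p assume p: "p \<in> {1..d}"
  then have "W p p = 1 \<or> W p p = -1" using W unfolding Wd_def by blast
  then show "W p p * W p p = 1" by auto
qed

lemma W_Od: assumes W: "W \<in> Wd d" shows "W \<in> Od d"
proof -
  note wp = W_props[OF W]
  have z: "\<forall>i j. i \<notin> {1..d} \<or> j \<notin> {1..d} \<longrightarrow> W i j = 0" using W unfolding Wd_def by blast
  have "(\<Sum>k=1..d. W i k * W j k) = (if i = j then 1 else 0)" if "i \<in> {1..d}" "j \<in> {1..d}" for i j
  proof -
    have "(\<Sum>k=1..d. W i k * W j k) = W i i * W j i" by (rule diag_sum_l) (use wp in auto)
    then show ?thesis using wp that by auto
  qed
  then show ?thesis unfolding Od_def using z by blast
qed

lemma act_W: assumes W: "W \<in> Wd d"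
  shows "act d W y = ((\<lambda>k. W k k * fst y k), (\<lambda>k j. W k k * snd y k j * W j j))"
proof -
  note wp = W_props[OF W]
  have 1: "fst (act d W y) = (\<lambda>k. W k k * fst y k)"
  proof
    fix k show "fst (act d W y) k = W k k * fst y k"
      unfolding act_fst Av_def by (rule diag_sum_l) (use wp in auto)
  qed
  have 2: "snd (act d W y) = (\<lambda>k j. W k k * snd y k j * W j j)"
  proof (intro ext)
    fix k j
    have "snd (act d W y) k j = (\<Sum>p=1..d. W k p * (\<Sum>q=1..d. snd y p q * W j q))"
      by (simp add: act_snd sum_distrib_left mult.assoc)
    also have "\<dots> = (\<Sum>p=1..d. W k p * (snd y p j * W j j))"
      by (rule sum.cong[OF refl], subst diag_sum_r) (use wp in auto)
    also have "\<dots> = W k k * (snd y k j * W j j)" by (rule diag_sum_l) (use wp in auto)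
    finally show "snd (act d W y) k j = W k k * snd y k j * W j j" by (simp add: mult.assoc)
  qed
  show ?thesis using 1 2 by (simp add: prod_eq_iff)
qed

lemma W_stab: assumes W: "W \<in> Wd d" shows "act d W ` Lset d m = Lset d m"
proof -
  note wp = W_props[OF W]
  have WO: "W \<in> Od d" by (rule W_Od[OF W])
  have sub: "act d W y \<in> Lset d m" if y: "y \<in> Lset d m" for y
  proof -
    have "act d W y \<in> Vsp d" by (rule act_V[OF WO L_V[OF y]])
    then show ?thesis using y unfolding L_iff act_W[OF W] by auto
  qed
  have "y \<in> act d W ` Lset d m" if y: "y \<in> Lset d m" for y
  proof -
    have yV: "y \<in> Vsp d" by (rule L_V[OF y])
    have "act d W (act d W y) = y"
    proof -
      have a: "W k k * (W k k * fst y k) = fst y k" for k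
        using wp(3)[of k] V_vec[OF yV, of k] by (cases "k \<in> {1..d}") (simp_all add: mult.assoc[symmetric])
      have b: "W k k * (W k k * snd y k j * W j j) * W j j = snd y k j" for k j
      proof (cases "k \<in> {1..d} \<and> j \<in> {1..d}")
        case True
        have "W k k * (W k k * snd y k j * W j j) * W j j = (W k k * W k k) * snd y k j * (W j j * W j j)"
          by (simp only: mult_ac)
        then show ?thesis using True wp(3) by simp
      next
        case False
        then show ?thesis using V_mat[OF yV, of k j] by auto
      qed
      show ?thesis unfolding act_W[OF W] by (simp add: a b)
    qed
    then show ?thesis using sub[OF y] by (metis image_eqI)
  qed
  then show ?thesis using sub by blast
qed

definition yv :: "nat \<Rightarrow> pt" where "yv d = ((\<lambda>i. if i = d then 1 else 0), (\<lambda>i j. 0))"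
definition ym :: "nat \<Rightarrow> pt" where
  "ym j = ((\<lambda>i. 0), (\<lambda>p q. if p = j - 1 \<and> q = j then 1 else if p = j \<and> q = j - 1 then -1 else 0))"

lemma yv_L: "1 \<le> d \<Longrightarrow> yv d \<in> Lset d m"
  unfolding L_iff Vsp_iff yv_def by auto

lemma ym_L: "3 \<le> j \<Longrightarrow> j \<le> d \<Longrightarrow> ym j \<in> Lset d m"
  unfolding L_iff Vsp_iff ym_def by auto

lemma col_to_row: assumes A: "A \<in> Od d" and l: "l \<in> {1..d}" and c: "\<And>k. k \<in> {1..d} \<Longrightarrow> k \<noteq> l \<Longrightarrow> A k l = 0"
  shows "A l l * A l l = 1" "\<And>k. k \<noteq> l \<Longrightarrow> A l k = 0"
proof -
  have s: "(\<Sum>p=1..d. A p l * A p k) = A l l * A l k" for k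
    by (rule sum_single) (use l c in auto)
  show "A l l * A l l = 1" using Od_cols[OF A l l] s[of l] by simp
  then have nz: "A l l \<noteq> 0" by auto
  show "A l k = 0" if k: "k \<noteq> l" for k
  proof (cases "k \<in> {1..d}")
    case True
    then show ?thesis using Od_cols[OF A l True] s[of k] k nz by simp
  next
    case False
    then show ?thesis using Od_zero[OF A] by blast
  qed
qed

lemma stab_W: assumes d: "2 \<le> d" and A: "A \<in> Od d" and st: "\<And>y. y \<in> Lset d (d - 1) \<Longrightarrow> act d A y \<in> Lset d (d - 1)"
  shows "A \<in> Wd d"
proof -
  define S where "S = Lset d (d - 1)"
  define good where "good l = ((\<forall>k\<in>{1..d}. k \<noteq> l \<longrightarrow> A k l = 0) \<and> A l l * A l l = 1 \<and> (\<forall>k. k \<noteq> l \<longrightarrow> A l k = 0))" for l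
  have mk: "good l" if l: "l \<in> {1..d}" and c: "\<And>k. k \<in> {1..d} \<Longrightarrow> k \<noteq> l \<Longrightarrow> A k l = 0" for l
    unfolding good_def using col_to_row[OF A l c] c by blast
  have gd: "good d"
  proof (rule mk)
    show "d \<in> {1..d}" using d by auto
    fix k assume k: "k \<in> {1..d}" "k \<noteq> d"
    have "act d A (yv d) \<in> S" unfolding S_def by (rule st, rule yv_L) (use d in auto)
    then have "fst (act d A (yv d)) k = 0" unfolding S_def by (rule vecz) (use d k in auto)
    moreover have "fst (act d A (yv d)) k = A k d"
      unfolding act_fst Av_def yv_def by (simp add: if_distrib[of "\<lambda>t. _ * t"] cong: if_cong) (use d in auto)
    ultimately show "A k d = 0" by simp
  qed
  have step: "good (j - 1)" if j: "2 \<le> j" "j \<le> d" and g: "\<And>l. j \<le> l \<Longrightarrow> l \<le> d \<Longrightarrow> good l" for j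
  proof (rule mk)
    show "j - 1 \<in> {1..d}" using j by auto
    fix k assume k: "k \<in> {1..d}" "k \<noteq> j - 1"
    show "A k (j - 1) = 0"
    proof (cases "j \<le> k")
      case True
      then show ?thesis using g[of k] k unfolding good_def by auto
    next
      case False
      then have kj: "k + 2 \<le> j" "3 \<le> j" using k j by auto
      have gj: "good j" using g[of j] j by simp
      have rowj: "\<And>q. q \<noteq> j \<Longrightarrow> A j q = 0" using gj unfolding good_def by blast
      have Ajj: "A j j \<noteq> 0" using gj unfolding good_def by auto
      have "act d A (ym j) \<in> S" unfolding S_def by (rule st, rule ym_L) (use kj j in auto)
      then have z: "snd (act d A (ym j)) k j = 0" unfolding S_def by (rule colz) (use kj j k in auto)
      have "snd (act d A (ym j)) k j = (\<Sum>p=1..d. A k p * (\<Sum>q=1..d. snd (ym j) p q * A j q))"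
        by (simp add: act_snd sum_distrib_left mult.assoc)
      also have "\<dots> = (\<Sum>p=1..d. A k p * (snd (ym j) p j * A j j))"
        by (rule sum.cong[OF refl], subst diag_sum_r) (use rowj j Od_zero[OF A] in auto)
      also have "\<dots> = A k (j - 1) * (snd (ym j) (j - 1) j * A j j)"
        by (rule sum_single) (use j in \<open>auto simp: ym_def\<close>)
      also have "\<dots> = A k (j - 1) * A j j" by (simp add: ym_def)
      finally show ?thesis using z Ajj by simp
    qed
  qed
  have all: "\<And>l. d - t \<le> l \<Longrightarrow> l \<le> d \<Longrightarrow> 1 \<le> l \<Longrightarrow> good l" for t
  proof (induction t)
    case 0
    then show ?case using gd by auto
  next
    case (Suc t)
    show ?case
    proof (cases "d - t \<le> l")
      case True
      then show ?thesis using Suc by blast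
    next
      case False
      then have l: "l = d - Suc t" "1 \<le> l" "l < d" using Suc.prems by auto
      have "good (Suc l - 1)"
        by (rule step) (use l Suc.IH in auto)
      then show ?thesis by simp
    qed
  qed
  have g: "good l" if "l \<in> {1..d}" for l using all[of d l] that by auto
  have z: "\<forall>i j. i \<notin> {1..d} \<or> j \<notin> {1..d} \<longrightarrow> A i j = 0" using A unfolding Od_def by blast
  have off: "\<forall>i j. i \<noteq> j \<longrightarrow> A i j = 0"
  proof (intro allI impI)
    fix i j :: nat assume ij: "i \<noteq> j"
    show "A i j = 0"
    proof (cases "i \<in> {1..d}")
      case True
      then show ?thesis using g[OF True] ij unfolding good_def by auto
    next
      case False
      then show ?thesis using z by blast
    qed
  qed
  have dg: "\<forall>i\<in>{1..d}. A i i = 1 \<or> A i i = -1"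
  proof
    fix i assume i: "i \<in> {1..d}"
    have "A i i * A i i = 1" using g[OF i] unfolding good_def by blast
    then have "(A i i)\<^sup>2 = 1" by (simp add: power2_eq_square)
    then show "A i i = 1 \<or> A i i = -1" by (simp add: power2_eq_1_iff)
  qed
  show ?thesis unfolding Wd_def using z off dg by blast
qed



lemma pf_w: assumes m: "1 \<le> m" "m + 1 \<le> d" shows "(\<lambda>x. nrm d (w d m x)) \<in> polyfun d"
proof (rule pf_nrm)
  fix l assume l: "l \<in> {1..d}"
  show "(\<lambda>x. w d m x l) \<in> polyfun d"
  proof (cases "l \<le> d - m")
    case True
    have e: "(\<lambda>x. w d m x l) = (\<lambda>x. E x l (d - m + 1))" by (rule ext) (use l True in \<open>simp add: w_def\<close>)
    show ?thesis unfolding e by (rule pf_E) (use l m in auto)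
  next
    case False
    have e: "(\<lambda>x. w d m x l) = (\<lambda>x. 0)" by (rule ext) (use False in \<open>simp add: w_def\<close>)
    show ?thesis unfolding e by (rule pf_const)
  qed
qed

lemma x0_rdom: assumes d: "2 \<le> d" and m: "1 \<le> m" "m + 1 \<le> d"
  shows "x0 d \<in> Lset d m \<inter> rdom d (Ff d (Suc m))"
proof -
  have k: "Suc m \<in> {1..d}" using m by auto
  have "x0 d \<in> Lset d m" by (rule L_mono[OF _ x0_L[OF d]]) (use m in auto)
  moreover have "x0 d \<in> rdom d (Ff d (Suc m))"
    using reval_Ff[OF d k x0_V Ud_fq(2)[OF x0_Ud[OF d] k]] d by auto
  ultimately show ?thesis by blast
qed

lemma rv_restr: assumes d: "2 \<le> d" and m: "1 \<le> m" "m + 1 \<le> d"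
  and x: "x \<in> Lset d m" "x \<in> rdom d (Ff d (Suc m))"
  shows "reval d (Ff d (Suc m)) x = nrm d (w d m x)"
proof -
  have k: "Suc m \<in> {1..d}" using m by auto
  have y0: "x0 d \<in> Lset d m" using x0_rdom[OF d m] by blast
  show ?thesis
  proof (rule reval_restr[OF ratfun_Ff[OF d k] pf_w[OF m] _ line_L y0 _ _ x])
    show "Lset d m \<subseteq> Vsp d" using L_V by blast
    show "snd (Ff d (Suc m)) (x0 d) \<noteq> 0" using Ud_fq(2)[OF x0_Ud[OF d] k] by (simp add: Ff_def)
    fix y assume y: "y \<in> Lset d m"
    show "fst (Ff d (Suc m)) y = nrm d (w d m y) * snd (Ff d (Suc m)) y"
      using restr[OF m y] by (simp add: Ff_def)
  qed
qed

lemma nrm_w_snd: assumes x: "x \<in> Vsp d" and m: "1 \<le> m" "m + 1 \<le> d"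
  shows "nrm d (w d m x) = (\<Sum>k=1..d-m. (snd x k (d - m + 1))\<^sup>2)"
proof -
  have "nrm d (w d m x) = (\<Sum>k=1..d-m. (w d m x k)\<^sup>2)"
    unfolding nrm_def by (rule sum.mono_neutral_right) (auto simp: w_def)
  also have "\<dots> = (\<Sum>k=1..d-m. (snd x k (d - m + 1))\<^sup>2)"
    by (rule sum.cong[OF refl]) (auto simp: w_def E_def)
  finally show ?thesis .
qed

theorem proposition3p6:
  fixes d :: nat
  assumes "2 \<le> d"
  shows "relative_section d (Wd d) (Lset d (d - 1))
    \<and> (\<exists>F :: nat \<Rightarrow> (pt \<Rightarrow> complex) \<times> (pt \<Rightarrow> complex).
        (\<forall>k\<in>{1..d}. ratfun d (F k) \<and> rat_invariant d (F k))
      \<and> (let U = {x \<in> Vsp d. (\<forall>k\<in>{1..d}. x \<in> rdom d (F k))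
                     \<and> (\<Prod>k=1..d. reval d (F k) x) \<noteq> 0}
         in U \<noteq> {} \<and> zariski_open d U \<and> (\<forall>A\<in>Od d. act d A ` U \<subseteq> U)
            \<and> (\<forall>x\<in>U. orbit d x \<subseteq> U \<longrightarrow> orbit d x \<inter> Lset d (d - 1) \<noteq> {}))
      \<and> (\<forall>x\<in>Vsp d. x \<in> rdom d (F 1) \<and> reval d (F 1) x = (\<Sum>i=1..d. (fst x i)\<^sup>2))
      \<and> (\<forall>i\<in>{2..<d}. Lset d (i - 1) \<inter> rdom d (F i) \<noteq> {}
           \<and> (\<forall>x\<in>Lset d (i - 1) \<inter> rdom d (F i).
                reval d (F i) x = (\<Sum>k=1..d-i+1. (snd x k (d - i + 2))\<^sup>2)))
      \<and> Lset d (d - 1) \<inter> rdom d (F d) \<noteq> {}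
      \<and> (\<forall>x\<in>Lset d (d - 1) \<inter> rdom d (F d). reval d (F d) x = (snd x 1 2)\<^sup>2))"
proof -
  have d: "2 \<le> d" by (rule assms)
  define S where "S = Lset d (d - 1)"
  have Uprops: "Ud d \<noteq> {} \<and> zariski_open d (Ud d) \<and> (\<forall>A\<in>Od d. act d A ` Ud d \<subseteq> Ud d)
            \<and> (\<forall>x\<in>Ud d. orbit d x \<subseteq> Ud d \<longrightarrow> orbit d x \<inter> S \<noteq> {})"
  proof (intro conjI ballI impI)
    show "Ud d \<noteq> {}" using x0_Ud[OF d] by blast
    show "zariski_open d (Ud d)" by (rule Ud_zar)
    show "act d A ` Ud d \<subseteq> Ud d" if "A \<in> Od d" for A using Ud_inv[OF that] by blast
    fix x assume x: "x \<in> Ud d"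
    obtain A where A: "A \<in> Od d" "act d A x \<in> S" using orbit_L[OF d x] unfolding S_def by blast
    have "act d A x \<in> orbit d x" unfolding orbit_def using A(1) by blast
    then show "orbit d x \<inter> S \<noteq> {}" using A(2) by blast
  qed
  have part1: "relative_section d (Wd d) S"
    unfolding relative_section_def
  proof (intro conjI)
    show "\<exists>U. U \<subseteq> Vsp d \<and> U \<noteq> {} \<and> zariski_open d U \<and> (\<forall>A\<in>Od d. act d A ` U \<subseteq> U)
          \<and> (\<forall>x\<in>U. orbit d x \<subseteq> U \<longrightarrow> orbit d x \<inter> S \<noteq> {})"
      by (rule exI[of _ "Ud d"]) (use Uprops in \<open>auto simp: Ud_def\<close>)
    show "Wd d = {A \<in> Od d. act d A ` S = S}"
    proof
      show "Wd d \<subseteq> {A \<in> Od d. act d A ` S = S}" unfolding S_def using W_Od W_stab by blast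
      show "{A \<in> Od d. act d A ` S = S} \<subseteq> Wd d"
      proof
        fix A assume "A \<in> {A \<in> Od d. act d A ` S = S}"
        then have A: "A \<in> Od d" "act d A ` S = S" by auto
        show "A \<in> Wd d" by (rule stab_W[OF d A(1)]) (use A(2) in \<open>auto simp: S_def\<close>)
      qed
    qed
  qed
  have c1: "\<forall>k\<in>{1..d}. ratfun d (Ff d k) \<and> rat_invariant d (Ff d k)"
    using ratfun_Ff[OF d] ratinv_Ff by blast
  have c2: "let U = {x \<in> Vsp d. (\<forall>k\<in>{1..d}. x \<in> rdom d (Ff d k)) \<and> (\<Prod>k=1..d. reval d (Ff d k) x) \<noteq> 0}
         in U \<noteq> {} \<and> zariski_open d U \<and> (\<forall>A\<in>Od d. act d A ` U \<subseteq> U)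
            \<and> (\<forall>x\<in>U. orbit d x \<subseteq> U \<longrightarrow> orbit d x \<inter> Lset d (d - 1) \<noteq> {})"
    unfolding Let_def U_eq[OF d] using Uprops unfolding S_def .
  have c3: "\<forall>x\<in>Vsp d. x \<in> rdom d (Ff d 1) \<and> reval d (Ff d 1) x = (\<Sum>i=1..d. (fst x i)\<^sup>2)"
  proof
    fix x assume x: "x \<in> Vsp d"
    have k: "1 \<in> {1..d}" using d by auto
    have q: "qn d 1 x \<noteq> 0" by (simp add: qn_def)
    show "x \<in> rdom d (Ff d 1) \<and> reval d (Ff d 1) x = (\<Sum>i=1..d. (fst x i)\<^sup>2)"
    proof -
      have r: "x \<in> rdom d (Ff d 1) \<and> reval d (Ff d 1) x = fn d 1 x / qn d 1 x" by (rule reval_Ff[OF d k x q])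
      have f: "fn d 1 x = (\<Sum>i=1..d. (fst x i)\<^sup>2)" unfolding fn_def nrm_def P0 by simp
      have q1: "qn d 1 x = 1" unfolding qn_def by simp
      show ?thesis using r unfolding f q1 by simp
    qed
  qed
  have c4: "\<forall>i\<in>{2..<d}. Lset d (i - 1) \<inter> rdom d (Ff d i) \<noteq> {}
           \<and> (\<forall>x\<in>Lset d (i - 1) \<inter> rdom d (Ff d i).
                reval d (Ff d i) x = (\<Sum>k=1..d-i+1. (snd x k (d - i + 2))\<^sup>2))"
  proof
    fix i assume i: "i \<in> {2..<d}"
    define m where "m = i - 1"
    have m: "1 \<le> m" "m + 1 \<le> d" and im: "i = Suc m" using i by (auto simp: m_def)
    have e1: "d - m = d - i + 1" "d - m + 1 = d - i + 2" using i by (auto simp: m_def)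
    show "Lset d (i - 1) \<inter> rdom d (Ff d i) \<noteq> {}
           \<and> (\<forall>x\<in>Lset d (i - 1) \<inter> rdom d (Ff d i).
                reval d (Ff d i) x = (\<Sum>k=1..d-i+1. (snd x k (d - i + 2))\<^sup>2))"
    proof (intro conjI ballI)
      have se: "Lset d (i - 1) \<inter> rdom d (Ff d i) = Lset d m \<inter> rdom d (Ff d (Suc m))"
        by (simp only: im diff_Suc_1)
      show "Lset d (i - 1) \<inter> rdom d (Ff d i) \<noteq> {}" unfolding se using x0_rdom[OF d m] by blast
      fix x assume x: "x \<in> Lset d (i - 1) \<inter> rdom d (Ff d i)"
      then have xL: "x \<in> Lset d m" "x \<in> rdom d (Ff d (Suc m))" unfolding se by blast+
      have h: "reval d (Ff d (Suc m)) x = (\<Sum>k=1..d-m. (snd x k (d - m + 1))\<^sup>2)"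
        using rv_restr[OF d m xL] nrm_w_snd[OF L_V[OF xL(1)] m] by simp
      show "reval d (Ff d i) x = (\<Sum>k=1..d-i+1. (snd x k (d - i + 2))\<^sup>2)"
        unfolding e1(1)[symmetric] e1(2)[symmetric] im[symmetric] using h im by simp
    qed
  qed
  have c5: "Lset d (d - 1) \<inter> rdom d (Ff d d) \<noteq> {}"
  proof -
    have m: "1 \<le> d - 1" "d - 1 + 1 \<le> d" and e: "Suc (d - 1) = d" using d by auto
    show ?thesis using x0_rdom[OF d m] unfolding e by blast
  qed
  have c6: "\<forall>x\<in>Lset d (d - 1) \<inter> rdom d (Ff d d). reval d (Ff d d) x = (snd x 1 2)\<^sup>2"
  proof
    fix x assume x: "x \<in> Lset d (d - 1) \<inter> rdom d (Ff d d)"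
    have m: "1 \<le> d - 1" "d - 1 + 1 \<le> d" and e: "Suc (d - 1) = d" "d - (d - 1) = 1" "d - (d - 1) + 1 = 2"
      using d by auto
    have xL: "x \<in> Lset d (d - 1)" "x \<in> rdom d (Ff d (Suc (d - 1)))" using x unfolding e by blast+
    have "reval d (Ff d (Suc (d - 1))) x = (\<Sum>k=1..d-(d-1). (snd x k (d - (d - 1) + 1))\<^sup>2)"
      using rv_restr[OF d m xL] nrm_w_snd[OF L_V[OF xL(1)] m] by simp
    then show "reval d (Ff d d) x = (snd x 1 2)\<^sup>2" unfolding e by (simp add: numeral_2_eq_2)
  qed
  show ?thesis
    unfolding S_def[symmetric]
    using part1 c1 c2 c3 c4 c5 c6 unfolding S_def by blast
qed

end
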